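(* Let $\mathbb{L}$ be a complete, algebraically closed non-Archimedean field of characteristic $0$ and let $\phi$ be a rational map over $\mathbb{L}$ of degree $\geq 2$ having good reduction. Let $\xi\neq\zeta_{Gauss}$ be a fixed point of $\phi$ in $\mathbb{P}^1_{an}$ which is totally ramified for $\phi$, and let $\vec v$ be the direction at $\zeta_{Gauss}$ containing $\xi$, with corresponding open Berkovich disk $B_{\vec v}$. Then $\xi$ is of type $1$, and $\xi$ is the unique fixed point of $\phi$ in $B_{\vec v}$.
   Context: $\mathbb{P}^1_{an}$ is the Berkovich projective line over $\mathbb{L}$; $\zeta_{Gauss}$ is the type $2$ point corresponding to the closed unit disk $D(0,1)$; type $1$ points are the points of $\mathbb{P}^1(\mathbb{L})$. Directions at $\zeta_{Gauss}$ are the connected components of $\mathbb{P}^1_{an}\setminus\{\zeta_{Gauss}\}$ (open Berkovich disks $B_{\vec v}$). Good reduction: a normalized form of $\phi$ (coprime numerator/denominator, coefficients in the valuation ring, not all in the maximal ideal) reduces modulo the maximal ideal to a map of the same degree. A point $\zeta$ is totally ramified for $\phi$ if the multiplicity (local degree) $m_\phi(\zeta)$ equals $\deg\phi$. *)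

theory Defs
  imports "HOL-Analysis.Analysis" "HOL-Computational_Algebra.Polynomial"
begin

definition nonarch_abs :: "('a::field \<Rightarrow> real) \<Rightarrow> bool" where
  "nonarch_abs absv \<longleftrightarrow>
     (\<forall>x. absv x \<ge> 0) \<and> (\<forall>x. absv x = 0 \<longleftrightarrow> x = 0) \<and>
     (\<forall>x y. absv (x * y) = absv x * absv y) \<and>
     (\<forall>x y. absv (x + y) \<le> max (absv x) (absv y))"

definition nontrivial_abs :: "('a::field \<Rightarrow> real) \<Rightarrow> bool" where
  "nontrivial_abs absv \<longleftrightarrow> (\<exists>x. absv x \<noteq> 0 \<and> absv x \<noteq> 1)"

definition complete_abs :: "('a::field \<Rightarrow> real) \<Rightarrow> bool" where
  "complete_abs absv \<longleftrightarrow>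
     (\<forall>X::nat \<Rightarrow> 'a. (\<forall>e>0. \<exists>N. \<forall>m\<ge>N. \<forall>n\<ge>N. absv (X m - X n) < e)
        \<longrightarrow> (\<exists>L. \<forall>e>0. \<exists>N. \<forall>n\<ge>N. absv (X n - L) < e))"

definition alg_closed :: "'a::field itself \<Rightarrow> bool" where
  "alg_closed _ \<longleftrightarrow> (\<forall>p::'a poly. degree p \<ge> 1 \<longrightarrow> (\<exists>x. poly p x = 0))"

definition CANA_field :: "('a::field \<Rightarrow> real) \<Rightarrow> bool" where
  "CANA_field absv \<longleftrightarrow> nonarch_abs absv \<and> nontrivial_abs absv \<and> complete_abs absv
     \<and> alg_closed TYPE('a)"

type_synonym 'a seminorm = "'a poly \<Rightarrow> real"

definition berkA1 :: "('a::field \<Rightarrow> real) \<Rightarrow> 'a seminorm set" where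
  "berkA1 absv = {s. (\<forall>f. s f \<ge> 0) \<and> (\<forall>c. s [:c:] = absv c) \<and>
                     (\<forall>f g. s (f * g) = s f * s g) \<and> (\<forall>f g. s (f + g) \<le> s f + s g)}"

text \<open>Weak (Gelfand) topology on the Berkovich affine line: the coarsest topology making
  all evaluations s \<mapsto> s f continuous.\<close>
definition berkA1_top :: "('a::field \<Rightarrow> real) \<Rightarrow> 'a seminorm topology" where
  "berkA1_top absv = topology (arbitrary union_of
      (finite intersection_of (\<lambda>S. \<exists>f a b. S = {s. a < s f \<and> s f < b})
        relative_to berkA1 absv))"

text \<open>Berkovich projective line: Some s for points of the affine line, None for infinity.\<close>
definition berkP1 :: "('a::field \<Rightarrow> real) \<Rightarrow> 'a seminorm option set" where
  "berkP1 absv = Some ` berkA1 absv \<union> {None}"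

text \<open>Topology of the one-point compactification of the Berkovich affine line.\<close>
definition berkP1_top :: "('a::field \<Rightarrow> real) \<Rightarrow> 'a seminorm option topology" where
  "berkP1_top absv = topology (\<lambda>U. U \<subseteq> berkP1 absv \<and>
      openin (berkA1_top absv) {s. Some s \<in> U} \<and>
      (None \<in> U \<longrightarrow> compactin (berkA1_top absv) (berkA1 absv - {s. Some s \<in> U})))"

definition type1_pt :: "('a::field \<Rightarrow> real) \<Rightarrow> 'a \<Rightarrow> 'a seminorm option" where
  "type1_pt absv a = Some (\<lambda>f. absv (poly f a))"

definition is_type1 :: "('a::field \<Rightarrow> real) \<Rightarrow> 'a seminorm option \<Rightarrow> bool" where
  "is_type1 absv \<xi> \<longleftrightarrow> \<xi> = None \<or> (\<exists>a. \<xi> = type1_pt absv a)"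

text \<open>The Gauss point, corresponding to the closed unit disk D(0,1).\<close>
definition gauss_pt :: "('a::field \<Rightarrow> real) \<Rightarrow> 'a seminorm option" where
  "gauss_pt absv = Some (\<lambda>f. Max {absv (coeff f i) | i. i \<le> degree f})"

text \<open>Directions at a point zeta: connected components of P^1_an minus zeta;
  dir_disk absv zeta xi is the component containing xi.\<close>
definition dir_disk :: "('a::field \<Rightarrow> real) \<Rightarrow> 'a seminorm option \<Rightarrow> 'a seminorm option
    \<Rightarrow> 'a seminorm option set" where
  "dir_disk absv \<zeta> \<xi> = {\<eta>. connected_component_of
      (subtopology (berkP1_top absv) (topspace (berkP1_top absv) - {\<zeta>})) \<xi> \<eta>}"

definition rdeg :: "'a::field poly \<Rightarrow> 'a poly \<Rightarrow> nat" where
  "rdeg P Q = max (degree P) (degree Q)"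

text \<open>Q^(deg h) * h(P/Q), a polynomial.\<close>
definition hsubst :: "'a::field poly \<Rightarrow> 'a poly \<Rightarrow> 'a poly \<Rightarrow> 'a poly" where
  "hsubst P Q h = (\<Sum>i\<le>degree h. smult (coeff h i) (P ^ i * Q ^ (degree h - i)))"

text \<open>Action of phi = P/Q on the Berkovich projective line:
  [h]_{phi(zeta)} = [h o phi]_zeta.\<close>
definition phi_act :: "'a::field poly \<Rightarrow> 'a poly \<Rightarrow> ('a \<Rightarrow> real) \<Rightarrow>
    'a seminorm option \<Rightarrow> 'a seminorm option" where
  "phi_act P Q absv \<zeta> = (case \<zeta> of
      None \<Rightarrow> (if degree P > degree Q then None
               else type1_pt absv (if degree P = degree Q then lead_coeff P / lead_coeff Q else 0))
    | Some s \<Rightarrow> (if s Q = 0 then None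
               else Some (\<lambda>h. s (hsubst P Q h) / (s Q) ^ degree h)))"

text \<open>Number of solutions (with multiplicity) of phi(z) = b, for b in L, among type 1
  points lying in U (infinity is a solution of multiplicity deg phi - deg(P - bQ)).\<close>
definition cnt_pre :: "'a::field poly \<Rightarrow> 'a poly \<Rightarrow> ('a \<Rightarrow> real) \<Rightarrow>
    'a seminorm option set \<Rightarrow> 'a \<Rightarrow> nat" where
  "cnt_pre P Q absv U b =
     (\<Sum>a\<in>{a. poly (P - smult b Q) a = 0 \<and> type1_pt absv a \<in> U}. order a (P - smult b Q))
     + (if None \<in> U then rdeg P Q - degree (P - smult b Q) else 0)"

text \<open>Multiplicity (local degree) m_phi(zeta): for all sufficiently small neighbourhoods U of
  zeta, every point has at most m_phi(zeta) preimages in U, and this is attained.\<close>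
definition loc_mult :: "'a::field poly \<Rightarrow> 'a poly \<Rightarrow> ('a \<Rightarrow> real) \<Rightarrow>
    'a seminorm option \<Rightarrow> nat" where
  "loc_mult P Q absv \<zeta> =
     (INF U \<in> {U. openin (berkP1_top absv) U \<and> \<zeta> \<in> U}. SUP b. cnt_pre P Q absv U b)"

definition totally_ramified :: "'a::field poly \<Rightarrow> 'a poly \<Rightarrow> ('a \<Rightarrow> real) \<Rightarrow>
    'a seminorm option \<Rightarrow> bool" where
  "totally_ramified P Q absv \<zeta> \<longleftrightarrow> loc_mult P Q absv \<zeta> = rdeg P Q"

definition hom_eval :: "'a::field poly \<Rightarrow> nat \<Rightarrow> 'a \<Rightarrow> 'a \<Rightarrow> 'a" where
  "hom_eval P d x y = (\<Sum>i\<le>d. coeff P i * x ^ i * y ^ (d - i))"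

definition normalized_form :: "('a::field \<Rightarrow> real) \<Rightarrow> 'a poly \<Rightarrow> 'a poly \<Rightarrow> bool" where
  "normalized_form absv P Q \<longleftrightarrow>
     (\<forall>i. absv (coeff P i) \<le> 1 \<and> absv (coeff Q i) \<le> 1) \<and>
     (\<exists>i. absv (coeff P i) = 1 \<or> absv (coeff Q i) = 1)"

text \<open>The reduced map [P~ : Q~] has degree d = deg phi iff the reductions of the
  degree-d homogeneous forms have no common zero on P^1 of the residue field; residue
  points are represented by lifts (x,y) with max(|x|,|y|) = 1, and a reduction vanishes
  iff the value has absolute value < 1.\<close>
definition good_reduction :: "('a::field \<Rightarrow> real) \<Rightarrow> 'a poly \<Rightarrow> 'a poly \<Rightarrow> bool" where
  "good_reduction absv P Q \<longleftrightarrow>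
     (\<exists>c. c \<noteq> 0 \<and> normalized_form absv (smult c P) (smult c Q) \<and>
        (\<forall>x y. max (absv x) (absv y) = 1 \<longrightarrow>
           max (absv (hom_eval (smult c P) (rdeg P Q) x y))
               (absv (hom_eval (smult c Q) (rdeg P Q) x y)) = 1))"

end

theory Submission
  imports Defs
begin
locale nav =
  fixes absv :: "'a::field_char_0 \<Rightarrow> real"
  assumes na: "nonarch_abs absv"
begin

lemma abs_nonneg: "absv x \<ge> 0" using na by (simp add: nonarch_abs_def)
lemma abs_zero_iff: "absv x = 0 \<longleftrightarrow> x = 0" using na by (simp add: nonarch_abs_def)
lemma abs_mult: "absv (x * y) = absv x * absv y" using na by (simp add: nonarch_abs_def)
lemma abs_ultra: "absv (x + y) \<le> max (absv x) (absv y)" using na by (simp add: nonarch_abs_def)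
lemma abs_0[simp]: "absv 0 = 0" using abs_zero_iff by simp
lemma abs_1[simp]: "absv 1 = 1"
proof -
  have "absv 1 = absv 1 * absv 1" using abs_mult[of 1 1] by simp
  moreover have "absv 1 \<noteq> 0" using abs_zero_iff by simp
  ultimately show ?thesis by (metis mult_cancel_right1)
qed
lemma abs_minus1[simp]: "absv (-1) = 1"
proof -
  have "absv (-1) * absv (-1) = 1" using abs_mult[of "-1" "-1"] by simp
  with abs_nonneg[of "-1"] show ?thesis
    by (metis abs_1 abs_mult abs_nonneg mult_cancel_left1 mult_le_cancel_left2 mult_le_cancel_right1 nle_le)
qed
lemma abs_uminus[simp]: "absv (- x) = absv x"
  using abs_mult[of "-1" x] by simp
lemma abs_diff_sym: "absv (x - y) = absv (y - x)"
  by (metis abs_uminus minus_diff_eq)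
lemma abs_power: "absv (x ^ n) = absv x ^ n"
  by (induct n) (auto simp: abs_mult)
lemma abs_divide: "absv (x / y) = absv x / absv y"
proof (cases "y = 0")
  case False
  then have "absv (x / y) * absv y = absv x" by (metis abs_mult nonzero_divide_eq_eq)
  moreover have "absv y \<noteq> 0" using False abs_zero_iff by simp
  ultimately show ?thesis by (simp add: field_simps)
qed simp
lemma abs_diff_ultra: "absv (x - y) \<le> max (absv x) (absv y)"
  using abs_ultra[of x "-y"] by simp
lemma abs_strict: assumes "absv x \<noteq> absv y" shows "absv (x + y) = max (absv x) (absv y)"
proof -
  have a: "absv (x + y) \<le> max (absv x) (absv y)" by (rule abs_ultra)
  have b: "absv x \<le> max (absv (x + y)) (absv y)" using abs_diff_ultra[of "x+y" y] by simp
  have c: "absv y \<le> max (absv (x + y)) (absv x)" using abs_diff_ultra[of "x+y" x] by simp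
  show ?thesis using a b c assms by linarith
qed
lemma abs_strict_diff: assumes "absv x \<noteq> absv y" shows "absv (x - y) = max (absv x) (absv y)"
  using abs_strict[of x "-y"] assms by simp
lemma abs_of_nat_le1: "absv (of_nat n) \<le> 1"
proof (induct n)
  case (Suc n) then show ?case using abs_ultra[of "of_nat n" 1] by (simp add: add.commute)
qed simp

end

lemma bernoulli_real: "(0::real) \<le> h \<Longrightarrow> 1 + real n * h \<le> (1 + h) ^ n"
proof (induct n)
  case (Suc n)
  have "1 + real (Suc n) * h \<le> (1 + real n * h) * (1 + h)"
    using Suc.prems by (simp add: algebra_simps)
  also have "\<dots> \<le> (1 + h) ^ n * (1 + h)"
    using Suc by (intro mult_right_mono) auto
  finally show ?case by (simp add: mult.commute)
qed simp

lemma pow_growth_bound: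
  fixes y M :: real
  assumes "0 \<le> y" "0 \<le> M" "\<And>n. y ^ n \<le> real (n + 1) * M ^ n"
  shows "y \<le> M"
proof (rule ccontr)
  assume "\<not> y \<le> M"
  then have yM: "M < y" by simp
  show False
  proof (cases "M = 0")
    case True
    then show False using assms(3)[of 1] yM by simp
  next
    case False
    then have Mp: "M > 0" using assms by simp
    define q where "q = y / M"
    have q1: "q > 1" using yM Mp by (simp add: q_def)
    define h where "h = q - 1"
    have hp: "h > 0" using q1 h_def by simp
    obtain n :: nat where n: "real n > 3 / h^2" "n \<ge> 1"
      by (metis reals_Archimedean2 le_cases of_nat_1 of_nat_le_iff less_le_trans not_less
          one_le_numeral real_arch_simple order.strict_trans1)
    have qn: "q ^ (2*n) \<le> real (2*n + 1)"
    proof -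
      have "y ^ (2*n) \<le> real (2*n+1) * M ^ (2*n)" by (rule assms(3))
      then show ?thesis using Mp by (simp add: q_def power_divide pos_divide_le_eq)
    qed
    have b: "1 + real n * h \<le> q ^ n" using bernoulli_real[of h n] hp h_def by simp
    have "(real n * h)^2 \<le> (q^n)^2"
      using b hp by (intro power_mono) auto
    also have "\<dots> = q ^ (2*n)" by (simp add: power_mult[symmetric] mult.commute)
    finally have c: "(real n * h)^2 \<le> real (2*n+1)" using qn by linarith
    have "real n * h^2 > 3" using n(1) hp by (simp add: field_simps)
    then have "real n * (real n * h^2) > real n * 3" using n(2) by simp
    then have "(real n * h)^2 > 3 * real n" by (simp add: power2_eq_square algebra_simps)
    then show False using c n(2) by simp
  qed
qed

context nav begin

definition berk where "berk t \<longleftrightarrow> t \<in> berkA1 absv"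

lemma berk_nonneg: "berk t \<Longrightarrow> t f \<ge> 0" by (simp add: berk_def berkA1_def)
lemma berk_const: "berk t \<Longrightarrow> t [:c:] = absv c" by (simp add: berk_def berkA1_def)
lemma berk_mult: "berk t \<Longrightarrow> t (f * g) = t f * t g" by (simp add: berk_def berkA1_def)
lemma berk_add: "berk t \<Longrightarrow> t (f + g) \<le> t f + t g" by (simp add: berk_def berkA1_def)
lemma berk_0: "berk t \<Longrightarrow> t 0 = 0" using berk_const[of t 0] by simp
lemma berk_1: "berk t \<Longrightarrow> t 1 = 1" using berk_const[of t 1] by (simp add: one_pCons)
lemma berk_smult: "berk t \<Longrightarrow> t (smult c f) = absv c * t f"
  using berk_mult[of t "[:c:]" f] berk_const[of t c] by simp
lemma berk_uminus: "berk t \<Longrightarrow> t (- f) = t f"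
  using berk_smult[of t "-1" f] by simp
lemma berk_power: "berk t \<Longrightarrow> t (f ^ n) = t f ^ n"
  by (induct n) (auto simp: berk_1 berk_mult)
lemma berk_sum_le: "berk t \<Longrightarrow> t (sum g I) \<le> (\<Sum>i\<in>I. t (g i))"
proof (induct I rule: infinite_finite_induct)
  case (insert x F)
  then show ?case using berk_add[of t "g x" "sum g F"] by simp
qed (auto simp: berk_0)

lemma berk_ultra: assumes "berk t" shows "t (f + g) \<le> max (t f) (t g)"
proof (rule pow_growth_bound)
  show "0 \<le> t (f + g)" using berk_nonneg[OF assms] by auto
  show "0 \<le> max (t f) (t g)" using berk_nonneg[OF assms, of f] by (simp add: le_max_iff_disj)
  fix n
  let ?M = "max (t f) (t g)"
  have M0: "0 \<le> ?M" using berk_nonneg[OF assms, of f] by (simp add: le_max_iff_disj)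
  have "t ((f + g) ^ n) = t (\<Sum>k\<le>n. of_nat (n choose k) * f ^ k * g ^ (n - k))"
    by (simp add: binomial_ring)
  also have "\<dots> \<le> (\<Sum>k\<le>n. t (of_nat (n choose k) * f ^ k * g ^ (n - k)))"
    by (rule berk_sum_le[OF assms])
  also have "\<dots> \<le> (\<Sum>k\<le>n. ?M ^ n)"
  proof (rule sum_mono)
    fix k assume k: "k \<in> {..n}"
    have oc: "(of_nat m :: 'a poly) = [:of_nat m:]" for m by (simp add: of_nat_poly)
    have "t (of_nat (n choose k) * f ^ k * g ^ (n - k))
        = absv (of_nat (n choose k)) * t f ^ k * t g ^ (n - k)"
      using assms by (simp add: berk_mult berk_power oc berk_smult)
    also have "\<dots> \<le> 1 * ?M ^ k * ?M ^ (n - k)"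
      using berk_nonneg[OF assms] abs_of_nat_le1 abs_nonneg M0
      by (intro mult_mono power_mono) auto
    also have "\<dots> = ?M ^ n" using k by (simp add: power_add[symmetric])
    finally show "t (of_nat (n choose k) * f ^ k * g ^ (n - k)) \<le> ?M ^ n" .
  qed
  also have "\<dots> = real (n + 1) * ?M ^ n" by simp
  finally show "t (f + g) ^ n \<le> real (n + 1) * ?M ^ n" using berk_power[OF assms] by simp
qed

lemma berk_diff_ultra: "berk t \<Longrightarrow> t (f - g) \<le> max (t f) (t g)"
  using berk_ultra[of t f "-g"] berk_uminus[of t g] by simp

lemma berk_strict: assumes "berk t" "t f \<noteq> t g" shows "t (f + g) = max (t f) (t g)"
proof -
  have a: "t (f + g) \<le> max (t f) (t g)" by (rule berk_ultra[OF assms(1)])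
  have b: "t f \<le> max (t (f + g)) (t g)" using berk_diff_ultra[OF assms(1), of "f+g" g] by simp
  have c: "t g \<le> max (t (f + g)) (t f)" using berk_diff_ultra[OF assms(1), of "f+g" f] by simp
  show ?thesis using a b c assms by linarith
qed

lemma berk_sum_ultra: assumes "berk t" "\<And>i. i \<in> I \<Longrightarrow> t (g i) \<le> C" "0 \<le> C"
  shows "t (sum g I) \<le> C"
  using assms(2)
proof (induct I rule: infinite_finite_induct)
  case (insert x F)
  then have a: "t (g x) \<le> C" and b: "t (sum g F) \<le> C" by auto
  have "t (g x + sum g F) \<le> max (t (g x)) (t (sum g F))" by (rule berk_ultra[OF assms(1)])
  also have "\<dots> \<le> C" using a b by simp
  finally show ?case using insert by simp
qed (auto simp: berk_0 assms)

lemma berk_prod_list: "berk t \<Longrightarrow> t (prod_list (map g xs)) = prod_list (map (\<lambda>x. t (g x)) xs)"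
  by (induct xs) (auto simp: berk_1 berk_mult)

lemma berk_coeff_bound:
  assumes "berk t" "t [:0,1:] \<le> T" "\<And>i. i \<le> degree f \<Longrightarrow> absv (coeff f i) * T ^ i \<le> C" "0 \<le> C"
  shows "t f \<le> C"
proof -
  have "t f = t (\<Sum>i\<le>degree f. monom (coeff f i) i)" by (simp add: poly_as_sum_of_monoms)
  also have "\<dots> \<le> C"
  proof (rule berk_sum_ultra[OF assms(1) _ assms(4)])
    fix i assume i: "i \<in> {..degree f}"
    have "t (monom (coeff f i) i) = absv (coeff f i) * t [:0,1:] ^ i"
      using assms(1) by (simp add: monom_altdef berk_smult berk_power)
    also have "\<dots> \<le> absv (coeff f i) * T ^ i"
      using assms(1,2) berk_nonneg abs_nonneg by (intro mult_left_mono power_mono) auto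
    also have "\<dots> \<le> C" using assms(3) i by simp
    finally show "t (monom (coeff f i) i) \<le> C" .
  qed
  finally show ?thesis .
qed

lemma berk_lin_const: "berk t \<Longrightarrow> t [:-c,1:] = t ([:0,1:] - [:c:])"
  by simp

lemma type1_berk: "berk (\<lambda>f. absv (poly f x))"
  unfolding berk_def berkA1_def
  using abs_nonneg abs_mult abs_ultra
  by (auto intro: order.trans[OF abs_ultra] simp: abs_nonneg)

lemma berk_zero_point:
  assumes "berk t" "t [:-x,1:] = 0"
  shows "t = (\<lambda>f. absv (poly f x))"
proof
  fix f
  have "[:-x,1:] dvd f - [:poly f x:]" by (simp add: poly_eq_0_iff_dvd[symmetric])
  then obtain g where g: "f - [:poly f x:] = [:-x,1:] * g" by (elim dvdE)
  have z: "t (f - [:poly f x:]) = 0" unfolding g berk_mult[OF assms(1)] using assms(2) by simp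
  have "t f \<le> max (t (f - [:poly f x:])) (t [:poly f x:])"
    using berk_ultra[OF assms(1), of "f - [:poly f x:]" "[:poly f x:]"] by simp
  moreover have "t [:poly f x:] \<le> max (t f) (t (f - [:poly f x:]))"
    using berk_diff_ultra[OF assms(1), of f "f - [:poly f x:]"] by simp
  ultimately show "t f = absv (poly f x)" using z berk_const[OF assms(1)] berk_nonneg[OF assms(1)]
    by (smt (verit))
qed

end

abbreviation lin :: "'a::comm_ring_1 \<Rightarrow> 'a poly" where "lin r \<equiv> [:-r, 1:]"

declare mult_pCons_left[simp del]

lemma split_poly:
  fixes F :: "'a::field poly"
  assumes alg: "alg_closed TYPE('a)" and "F \<noteq> 0"
  shows "\<exists>rs. F = smult (lead_coeff F) (prod_list (map lin rs)) \<and> length rs = degree F"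
  using assms(2)
proof (induct n \<equiv> "degree F" arbitrary: F)
  case 0
  then have "F = [:coeff F 0:]" by (metis degree_0_id)
  then have "F = smult (lead_coeff F) (prod_list (map lin []))"
    using 0 by (simp add: degree_0_id)
  then show ?case using 0 by (intro exI[of _ "[]"]) simp
next
  case (Suc n)
  then have "degree F \<ge> 1" by simp
  then obtain x where x: "poly F x = 0" using alg unfolding alg_closed_def by blast
  then have "lin x dvd F" by (simp add: poly_eq_0_iff_dvd)
  then obtain G where G: "F = lin x * G" by (elim dvdE)
  have G0: "G \<noteq> 0" using G Suc.prems by auto
  have dG: "degree G = n" using G G0 Suc.hyps(2) by (simp add: degree_mult_eq)
  have lG: "lead_coeff F = lead_coeff G" using G by (simp add: lead_coeff_mult)
  obtain rs where rs: "G = smult (lead_coeff G) (prod_list (map lin rs))" "length rs = degree G"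
    using Suc.hyps(1)[OF dG[symmetric] G0] by blast
  have "F = lin x * smult (lead_coeff F) (prod_list (map lin rs))"
    using G rs(1) lG by metis
  also have "\<dots> = smult (lead_coeff F) (prod_list (map lin (x # rs)))"
    by (simp only: mult_smult_right list.map prod_list.Cons)
  finally show ?case using rs(2) dG Suc.hyps(2) by (intro exI[of _ "x # rs"]) simp
qed

lemma poly_prod_lin: "poly (smult l (prod_list (map lin rs))) a = l * prod_list (map (\<lambda>r. a - r) rs)"
  by (induct rs arbitrary: l) (auto simp: algebra_simps)

lemma prod_lin_nz: "prod_list (map lin rs) \<noteq> (0:: 'a::idom poly)"
proof -
  have "0 \<notin> set (map lin rs :: 'a poly list)" by auto
  then show ?thesis by (simp only: prod_list_zero_iff) simp
qed

lemma order_prod_lin: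
  fixes l :: "'a::idom"
  assumes "l \<noteq> 0"
  shows "order a (smult l (prod_list (map lin rs))) = count (mset rs) a"
proof -
  have "order a (prod_list (map lin rs)) = count (mset rs) a"
  proof (induct rs)
    case Nil
    then show ?case using order_0I[of 1 a] by simp
  next
    case (Cons r rs)
    have o: "order a (lin r) = (if a = r then 1 else 0)"
    proof (cases "a = r")
      case True then show ?thesis using order_power_n_n[of a 1] by simp
    next
      case False then show ?thesis by (simp add: order_0I)
    qed
    have "order a (lin r * prod_list (map lin rs)) = order a (lin r) + order a (prod_list (map lin rs))"
      using prod_lin_nz[of rs] by (intro order_mult) auto
    then show ?case using Cons o by auto
  qed
  then show ?thesis using assms by (simp add: order_smult)
qed

lemma sum_count_filter:
  assumes "finite B"
  shows "(\<Sum>a\<in>B. count (mset rs) a) = length (filter (\<lambda>x. x \<in> B) rs)"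
proof (induct rs)
  case (Cons r rs)
  have "(\<Sum>a\<in>B. count (mset (r # rs)) a) = (\<Sum>a\<in>B. count (mset rs) a + (if a = r then 1 else 0))"
    by (intro sum.cong) auto
  also have "\<dots> = (\<Sum>a\<in>B. count (mset rs) a) + (\<Sum>a\<in>B. (if a = r then 1 else 0))"
    by (rule sum.distrib)
  also have "(\<Sum>a\<in>B. (if a = r then 1 else 0::nat)) = (if r \<in> B then 1 else 0)"
    using assms by (simp add: sum.delta')
  finally show ?case using Cons by simp
qed simp

definition gn :: "('a::field \<Rightarrow> real) \<Rightarrow> 'a poly \<Rightarrow> real" where
  "gn absv f = Max {absv (coeff f i) | i. i \<le> degree f}"

lemma gauss_pt_gn: "gauss_pt absv = Some (gn absv)"
  by (simp add: gauss_pt_def gn_def[abs_def])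

context nav begin

lemma gn_fin: "finite {absv (coeff f i) | i. i \<le> degree f}" by simp

lemma gn_ge: "absv (coeff f i) \<le> gn absv f"
proof (cases "i \<le> degree f")
  case True then show ?thesis unfolding gn_def by (intro Max_ge) auto
next
  case False
  then have "coeff f i = 0" by (simp add: coeff_eq_0)
  moreover have "absv (coeff f 0) \<le> gn absv f" unfolding gn_def by (intro Max_ge) auto
  ultimately show ?thesis using abs_nonneg[of "coeff f 0"] by simp
qed

lemma gn_le: assumes "\<And>i. i \<le> degree f \<Longrightarrow> absv (coeff f i) \<le> C" shows "gn absv f \<le> C"
  unfolding gn_def using assms by (intro Max.boundedI) auto

lemma gn_nonneg: "0 \<le> gn absv f" using gn_ge[of f 0] abs_nonneg[of "coeff f 0"] by linarith

lemma gn_lin_mult: "gn absv (lin a * g) \<le> max 1 (absv a) * gn absv g"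
proof (rule gn_le)
  fix i
  have c: "coeff (lin a * g) i = - a * coeff g i + (case i of 0 \<Rightarrow> 0 | Suc n \<Rightarrow> coeff g n)"
    by (simp add: coeff_pCons mult_pCons_left)
  have b1: "absv (- a * coeff g i) \<le> max 1 (absv a) * gn absv g"
    using gn_ge[of g i] abs_nonneg gn_nonneg
    by (simp add: abs_mult) (intro mult_mono, auto)
  have b2: "absv (case i of 0 \<Rightarrow> 0 | Suc n \<Rightarrow> coeff g n) \<le> max 1 (absv a) * gn absv g"
  proof (cases i)
    case 0 then show ?thesis using gn_nonneg[of g] by simp
  next
    case (Suc n)
    have "absv (coeff g n) \<le> 1 * gn absv g" using gn_ge by simp
    also have "\<dots> \<le> max 1 (absv a) * gn absv g" using gn_nonneg by (intro mult_right_mono) auto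
    finally show ?thesis using Suc by simp
  qed
  show "absv (coeff (lin a * g) i) \<le> max 1 (absv a) * gn absv g"
    unfolding c
    by (rule order_trans[OF abs_ultra]) (use b1 b2 in simp)
qed

lemma gn_smult: "gn absv (smult l g) \<le> absv l * gn absv g"
  by (rule gn_le) (auto simp: abs_mult intro: mult_left_mono gn_ge abs_nonneg)

lemma gn_one: "gn absv 1 = 1"
  unfolding gn_def by simp

lemma gn_prod_lin: "gn absv (smult l (prod_list (map lin rs))) \<le> absv l * prod_list (map (\<lambda>r. max 1 (absv r)) rs)"
proof -
  have "gn absv (prod_list (map lin rs)) \<le> prod_list (map (\<lambda>r. max 1 (absv r)) rs)"
  proof (induct rs)
    case Nil then show ?case by (simp add: gn_one)
  next
    case (Cons r rs)
    have "gn absv (prod_list (map lin (r # rs))) \<le> max 1 (absv r) * gn absv (prod_list (map lin rs))"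
      by (simp only: list.map prod_list.Cons) (rule gn_lin_mult)
    also have "\<dots> \<le> max 1 (absv r) * prod_list (map (\<lambda>r. max 1 (absv r)) rs)"
      using Cons by (intro mult_left_mono) auto
    finally show ?case by simp
  qed
  then show ?thesis using gn_smult[of l "prod_list (map lin rs)"] abs_nonneg[of l]
    by (meson mult_left_mono order_trans)
qed

lemma berk_prod_lin: "berk t \<Longrightarrow> t (smult l (prod_list (map lin rs))) = absv l * prod_list (map (\<lambda>r. t (lin r)) rs)"
  by (simp add: berk_smult berk_prod_list)

lemma classify_gauss:
  assumes alg: "alg_closed TYPE('a)" and t: "berk t" and tz: "t [:0,1:] \<le> 1"
    and ge: "\<And>a. absv a \<le> 1 \<Longrightarrow> t (lin a) \<ge> 1"
  shows "t = gn absv"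
proof
  fix f
  have lin_eq: "t (lin a) = max 1 (absv a)" for a
  proof (cases "absv a \<le> 1")
    case True
    have "t (lin a) \<le> max (t [:0,1:]) (t [:a:])"
      using berk_diff_ultra[OF t, of "[:0,1:]" "[:a:]"] by simp
    then have "t (lin a) \<le> 1" using tz True berk_const[OF t] by simp
    then show ?thesis using ge[OF True] True by simp
  next
    case False
    have "t ([:0,1:] - [:a:]) = max (t [:0,1:]) (t (-[:a:]))"
      using berk_strict[OF t, of "[:0,1:]" "-[:a:]"] False tz berk_uminus[OF t] berk_const[OF t] by simp
    then show ?thesis using False tz berk_uminus[OF t] berk_const[OF t] by simp
  qed
  have up: "t f \<le> gn absv f"
    by (rule berk_coeff_bound[OF t tz]) (auto simp: gn_ge gn_nonneg)
  show "t f = gn absv f"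
  proof (cases "f = 0")
    case True then show ?thesis using berk_0[OF t] by (simp add: gn_def)
  next
    case False
    then obtain rs where rs: "f = smult (lead_coeff f) (prod_list (map lin rs))"
      using split_poly[OF alg] by blast
    have "t f = absv (lead_coeff f) * prod_list (map (\<lambda>r. max 1 (absv r)) rs)"
      by (subst rs) (simp add: berk_prod_lin[OF t] lin_eq)
    moreover have "gn absv f \<le> absv (lead_coeff f) * prod_list (map (\<lambda>r. max 1 (absv r)) rs)"
      by (subst rs) (rule gn_prod_lin)
    ultimately show ?thesis using up by simp
  qed
qed

end

lemma conn_sep:
  assumes "connected_component_of (subtopology T S) x y" "W \<union> V = S" "W \<inter> V = {}"
    "openin T W" "openin T V" "x \<in> W"
  shows "y \<in> W"
proof -
  obtain C where C: "connectedin (subtopology T S) C" "x \<in> C" "y \<in> C"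
    using assms(1) unfolding connected_component_of_def by blast
  then have Cc: "connectedin T C" "C \<subseteq> S" by (auto simp: connectedin_subtopology)
  show ?thesis
  proof (rule ccontr)
    assume "y \<notin> W"
    then have "y \<in> V" using C Cc assms(2) by auto
    then show False
      using Cc(1) assms C(2,3) Cc(2) unfolding connectedin by blast
  qed
qed

context nav begin

abbreviation "A1T \<equiv> berkA1_top absv"
abbreviation "P1T \<equiv> berkP1_top absv"

lemma openin_A1T: "openin A1T = arbitrary union_of (finite intersection_of
      (\<lambda>S. \<exists>f a b. S = {s. a < s f \<and> s f < b}) relative_to berkA1 absv)"
  unfolding berkA1_top_def by (simp add: istopology_subbase)

lemma topspace_A1T[simp]: "topspace A1T = berkA1 absv"
  unfolding berkA1_top_def by simp

lemma open_sub: "openin A1T {t \<in> berkA1 absv. a < t f \<and> t f < b}"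
proof -
  have "(finite intersection_of (\<lambda>S. \<exists>f a b. S = {s. a < s f \<and> s f < b}) relative_to berkA1 absv)
          {t \<in> berkA1 absv. a < t f \<and> t f < b}"
    unfolding relative_to_def
    by (rule exI[of _ "{s. a < s f \<and> s f < b}"]) (auto intro!: finite_intersection_of_inc)
  then show ?thesis unfolding openin_A1T by (rule arbitrary_union_of_inc)
qed

lemma open_lt: "openin A1T {t \<in> berkA1 absv. t f < b}"
proof -
  have p: "-1 < t f" if "t \<in> berkA1 absv" for t
  proof -
    have "0 \<le> t f" using berk_nonneg[of t f] that unfolding berk_def by auto
    then show ?thesis by simp
  qed
  have "{t \<in> berkA1 absv. t f < b} = {t \<in> berkA1 absv. -1 < t f \<and> t f < b}"
    using p by auto
  then show ?thesis using open_sub by simp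
qed

lemma open_gt: "openin A1T {t \<in> berkA1 absv. a < t f}"
proof -
  have "{t \<in> berkA1 absv. a < t f} = (\<Union>n::nat. {t \<in> berkA1 absv. a < t f \<and> t f < real n})"
    by (auto intro: reals_Archimedean2)
  then show ?thesis using open_sub by (auto intro!: openin_Union)
qed

definition Pp where
  "Pp U \<longleftrightarrow> U \<subseteq> berkP1 absv \<and> openin A1T {s. Some s \<in> U} \<and>
      (None \<in> U \<longrightarrow> compactin A1T (berkA1 absv - {s. Some s \<in> U}))"

lemma istop_Pp: "istopology Pp"
  unfolding istopology_def
proof (intro conjI allI impI ballI)
  fix S T assume S: "Pp S" and T: "Pp T"
  have e: "{s. Some s \<in> S \<inter> T} = {s. Some s \<in> S} \<inter> {s. Some s \<in> T}" by auto
  have e2: "berkA1 absv - {s. Some s \<in> S \<inter> T} =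
       (berkA1 absv - {s. Some s \<in> S}) \<union> (berkA1 absv - {s. Some s \<in> T})" by auto
  show "Pp (S \<inter> T)" using S T unfolding Pp_def e
    by (auto intro: openin_Int compactin_Un simp: Diff_Int)
next
  fix K assume K: "\<forall>S\<in>K. Pp S"
  have e: "{s. Some s \<in> \<Union>K} = (\<Union>S\<in>K. {s. Some s \<in> S})" by auto
  have o: "openin A1T {s. Some s \<in> \<Union>K}" unfolding e using K unfolding Pp_def
    by (auto intro!: openin_Union)
  have c: "compactin A1T (berkA1 absv - {s. Some s \<in> \<Union>K})" if N: "None \<in> \<Union>K"
  proof -
    from N obtain S0 where S0: "S0 \<in> K" "None \<in> S0" by (rule UnionE)
    then have c0: "compactin A1T (berkA1 absv - {s. Some s \<in> S0})" using K Pp_def by auto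
    have "closedin A1T (berkA1 absv - {s. Some s \<in> \<Union>K})"
      using o openin_subset[OF o] by (auto simp: closedin_def double_diff)
    then show ?thesis by (intro closed_compactin[OF c0]) (use S0 in auto)
  qed
  show "Pp (\<Union>K)" using K o c unfolding Pp_def by auto
qed

lemma openin_P1T: "openin P1T = Pp"
  unfolding berkP1_top_def Pp_def[abs_def, symmetric] using istop_Pp by simp

lemma topspace_P1T[simp]: "topspace P1T = berkP1 absv"
proof -
  have e: "{s. Some s \<in> berkP1 absv} = berkA1 absv" by (auto simp: berkP1_def)
  have "Pp (berkP1 absv)" unfolding Pp_def e
    using openin_topspace[of A1T] by (auto simp: berkP1_def)
  then have "berkP1 absv \<subseteq> topspace P1T" using openin_P1T openin_subset by metis
  moreover have "topspace P1T \<subseteq> berkP1 absv"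
    using openin_topspace[of P1T] unfolding openin_P1T Pp_def by auto
  ultimately show ?thesis by auto
qed

lemma open_Some: assumes "openin A1T V" shows "openin P1T (Some ` V)"
proof -
  have "V \<subseteq> berkA1 absv" using openin_subset[OF assms] by simp
  moreover have "{s. Some s \<in> Some ` V} = V" by auto
  ultimately show ?thesis unfolding openin_P1T Pp_def berkP1_def using assms by auto
qed

definition Cb :: "real \<Rightarrow> 'a poly \<Rightarrow> real" where
  "Cb M f = (\<Sum>i\<le>degree f. absv (coeff f i) * max 1 M ^ i)"

lemma berk_le_Cb:
  assumes t: "berk t" and tz: "t [:0,1:] \<le> M"
  shows "t f \<le> Cb M f"
proof -
  have "t f = t (\<Sum>i\<le>degree f. monom (coeff f i) i)" by (simp add: poly_as_sum_of_monoms)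
  also have "\<dots> \<le> (\<Sum>i\<le>degree f. t (monom (coeff f i) i))" by (rule berk_sum_le[OF t])
  also have "\<dots> \<le> Cb M f" unfolding Cb_def
  proof (rule sum_mono)
    fix i
    have "t (monom (coeff f i) i) = absv (coeff f i) * t [:0,1:] ^ i"
      using t by (simp add: monom_altdef berk_smult berk_power)
    also have "\<dots> \<le> absv (coeff f i) * max 1 M ^ i"
      using tz berk_nonneg[OF t] abs_nonneg by (intro mult_left_mono power_mono) auto
    finally show "t (monom (coeff f i) i) \<le> absv (coeff f i) * max 1 M ^ i" .
  qed
  finally show ?thesis .
qed

abbreviation "PT \<equiv> product_topology (\<lambda>_::'a poly. euclideanreal) UNIV"

lemma proj_cont: "continuous_map PT euclideanreal (\<lambda>t. t f)"
  using continuous_map_product_projection[of f UNIV "\<lambda>_. euclideanreal"] by simp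

lemma compact_disk: "compactin A1T {t \<in> berkA1 absv. t [:0,1:] \<le> M}"
proof -
  define K where "K = {t \<in> berkA1 absv. t [:0,1:] \<le> M}"
  define Box where "Box = PiE UNIV (\<lambda>f. {0 .. Cb M f})"
  have cB: "compactin PT Box" unfolding Box_def by (subst compactin_PiE) auto
  have KB: "K \<subseteq> Box" unfolding K_def Box_def
    using berk_le_Cb berk_nonneg unfolding berk_def by auto
  have Keq: "K = (\<Inter>f. {t. t f \<in> {0..}}) \<inter> (\<Inter>c. {t. t [:c:] - absv c \<in> {0}})
       \<inter> (\<Inter>fg. {t. t (fst fg * snd fg) - t (fst fg) * t (snd fg) \<in> {0}})
       \<inter> (\<Inter>fg. {t. t (fst fg) + t (snd fg) - t (fst fg + snd fg) \<in> {0..}})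
       \<inter> {t. t [:0,1:] \<in> {..M}}"
    unfolding K_def berkA1_def by (force simp: le_diff_eq diff_le_eq)
  have cl: "closedin PT {t. h t \<in> C}" if "continuous_map PT euclideanreal h" "closed C" for h C
    using closedin_continuous_map_preimage[OF that(1), of C] that(2) by simp
  have pc: "continuous_map PT euclideanreal (\<lambda>t. t f)" for f by (rule proj_cont)
  have ci: "closedin PT (\<Inter>i. S i)" if "\<And>i. closedin PT (S i)" for S :: "'b \<Rightarrow> ('a poly \<Rightarrow> real) set"
    using that by (intro closedin_Inter) auto
  have i1: "closedin PT {t. t f \<in> {0..}}" for f by (rule cl[OF pc]) simp
  have i2: "closedin PT {t. t [:c:] - absv c \<in> {0}}" for c
    by (rule cl) (intro continuous_intros pc, simp)
  have i3: "closedin PT {t. t (fst fg * snd fg) - t (fst fg) * t (snd fg) \<in> {0}}" for fg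
    by (rule cl) (intro continuous_intros pc, simp)
  have i4: "closedin PT {t. t (fst fg) + t (snd fg) - t (fst fg + snd fg) \<in> {0..}}" for fg
    by (rule cl) (intro continuous_intros pc, simp)
  have i5: "closedin PT {t. t [:0,1:] \<in> {..M}}" by (rule cl[OF pc]) simp
  have clK: "closedin PT K" unfolding Keq
    by (intro closedin_Int ci i1 i2 i3 i4 i5)
  have cK: "compactin PT K" by (rule closed_compactin[OF cB KB clK])
  have "continuous_map (subtopology PT K) A1T id"
    unfolding berkA1_top_def
  proof (rule continuous_map_into_topology_subbase)
    show "id x \<in> topspace (topology (arbitrary union_of (finite intersection_of
        (\<lambda>S. \<exists>f a b. S = {s. a < s f \<and> s f < b}) relative_to berkA1 absv)))"
      if "x \<in> topspace (subtopology PT K)" for x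
      using that by (simp add: K_def)
    fix U :: "('a poly \<Rightarrow> real) set"
    assume "\<exists>f a b. U = {s. a < s f \<and> s f < b}"
    then obtain f a b where U: "U = {s. a < s f \<and> s f < b}" by blast
    have "openin PT {t::'a poly \<Rightarrow> real. t f \<in> {a<..<b::real}}"
      using openin_continuous_map_preimage[OF pc[of f], of "{a<..<b}"] by simp
    then have "openin (subtopology PT K) (K \<inter> {t::'a poly \<Rightarrow> real. t f \<in> {a<..<b::real}})"
      by (rule openin_subtopology_Int2)
    moreover have "{x \<in> topspace (subtopology PT K). id x \<in> U} = K \<inter> {t::'a poly \<Rightarrow> real. t f \<in> {a<..<b::real}}"
      using U by auto
    ultimately show "openin (subtopology PT K) {x \<in> topspace (subtopology PT K). id x \<in> U}" by simp
  qed
  moreover have "compactin (subtopology PT K) K" using cK by (simp add: compactin_subtopology)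
  ultimately have "compactin A1T (id ` K)" by (rule image_compactin[rotated])
  then show ?thesis by (simp add: K_def)
qed

lemma open_inf_nbhd: "openin P1T (insert None (Some ` {t \<in> berkA1 absv. M < t [:0,1:]}))"
proof -
  have e: "{s. Some s \<in> insert None (Some ` {t \<in> berkA1 absv. M < t [:0,1:]})} = {t \<in> berkA1 absv. M < t [:0,1:]}"
    by auto
  have e2: "berkA1 absv - {t \<in> berkA1 absv. M < t [:0,1:]} = {t \<in> berkA1 absv. t [:0,1:] \<le> M}" by auto
  show ?thesis unfolding openin_P1T Pp_def e e2 using open_gt compact_disk
    by (auto simp: berkP1_def)
qed

end

lemma choose_r:
  fixes \<rho> K U :: real and n :: nat
  assumes "0 < \<rho>" "0 < n" "\<rho> ^ n < K" "\<rho> < U"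
  shows "\<exists>r. \<rho> < r \<and> r < U \<and> r ^ n < K"
proof -
  have K0: "0 < K" using assms by (meson less_trans zero_less_power)
  have "root n (\<rho> ^ n) < root n K" using assms by simp
  then have rk: "\<rho> < root n K" using assms real_root_power_cancel[of n \<rho>] by simp
  define r where "r = (\<rho> + min U (root n K)) / 2"
  have "\<rho> < r" "r < U" "r < root n K" using rk assms by (auto simp: r_def)
  moreover have "r ^ n < root n K ^ n"
    using \<open>r < root n K\<close> \<open>\<rho> < r\<close> assms by (intro power_strict_mono) auto
  ultimately show ?thesis using K0 assms by (intro exI[of _ r]) auto
qed

lemma prod_list_le_pow:
  fixes g :: "'b \<Rightarrow> real"
  assumes "\<And>x. x \<in> set xs \<Longrightarrow> 0 \<le> g x \<and> g x \<le> B"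
  shows "prod_list (map g xs) \<le> B ^ length xs"
  using assms
proof (induct xs)
  case (Cons x xs)
  have gx: "0 \<le> g x" "g x \<le> B" using Cons.prems by auto
  have pn: "0 \<le> prod_list (map g xs)" by (rule prod_list_nonneg) (use Cons.prems in auto)
  have "g x * prod_list (map g xs) \<le> B * B ^ length xs"
    using Cons gx pn by (intro mult_mono) (auto intro: order_trans[OF gx(1) gx(2)])
  then show ?case by simp
qed simp

lemma prod_list_ge_pow:
  fixes g :: "'b \<Rightarrow> real"
  assumes "\<And>x. x \<in> set xs \<Longrightarrow> B \<le> g x" "0 \<le> B"
  shows "B ^ length xs \<le> prod_list (map g xs)"
  using assms
proof (induct xs)
  case (Cons x xs)
  have gx: "B \<le> g x" using Cons.prems by auto
  then have "B * B ^ length xs \<le> g x * prod_list (map g xs)"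
    using Cons by (intro mult_mono) (auto intro: order_trans[OF _ gx])
  then show ?case by simp
qed simp

lemma prod_list_eq_pow:
  fixes g :: "'b \<Rightarrow> real"
  assumes "\<And>x. x \<in> set xs \<Longrightarrow> g x = B"
  shows "prod_list (map g xs) = B ^ length xs"
  using assms by (induct xs) auto

lemma length_filter_all: "length (filter P xs) \<ge> length xs \<Longrightarrow> x \<in> set xs \<Longrightarrow> P x"
  using length_filter_less[of x xs P] by fastforce

locale gr = nav absv for absv :: "'a::field_char_0 \<Rightarrow> real" +
  fixes P Q :: "'a poly" and c :: 'a
  assumes alg: "alg_closed TYPE('a)" and compl: "complete_abs absv"
    and cop: "coprime P Q" and d2: "rdeg P Q \<ge> 2" and c0: "c \<noteq> 0"
    and nf: "normalized_form absv (smult c P) (smult c Q)"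
    and hom: "\<forall>x y. max (absv x) (absv y) = 1 \<longrightarrow>
           max (absv (hom_eval (smult c P) (rdeg P Q) x y))
               (absv (hom_eval (smult c Q) (rdeg P Q) x y)) = 1"
begin

abbreviation "d \<equiv> rdeg P Q"
abbreviation "P1 \<equiv> smult c P"
abbreviation "Q1 \<equiv> smult c Q"
abbreviation "F1 b \<equiv> P1 - smult b Q1"

lemma cP1: "absv (coeff P1 i) \<le> 1" and cQ1: "absv (coeff Q1 i) \<le> 1"
  using nf unfolding normalized_form_def by auto

lemma dP: "degree P \<le> d" and dQ: "degree Q \<le> d" by (auto simp: rdeg_def)
lemma dP1: "degree P1 \<le> d" and dQ1: "degree Q1 \<le> d" using dP dQ by auto

lemma hom_poly: assumes "degree f \<le> d" shows "hom_eval f d x 1 = poly f x"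
proof -
  have "poly f x = poly (\<Sum>i\<le>d. monom (coeff f i) i) x" using poly_as_sum_of_monoms'[OF assms] by simp
  also have "\<dots> = (\<Sum>i\<le>d. coeff f i * x ^ i)" by (simp add: poly_sum poly_monom)
  finally show ?thesis by (simp add: hom_eval_def)
qed

lemma hom_lead: "hom_eval f n 1 0 = coeff f n"
proof -
  have "hom_eval f n 1 0 = (\<Sum>i\<le>n. if i = n then coeff f i else 0)"
    unfolding hom_eval_def by (intro sum.cong) (auto simp: power_0_left)
  then show ?thesis by simp
qed

lemma red_pt: "absv x \<le> 1 \<Longrightarrow> max (absv (poly P1 x)) (absv (poly Q1 x)) = 1"
  using hom[rule_format, of x 1] hom_poly[OF dP1, of x] hom_poly[OF dQ1, of x] by (simp add: max_def)

lemma red_inf: "max (absv (coeff P1 d)) (absv (coeff Q1 d)) = 1"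
proof -
  have "max (absv 1) (absv (0::'a)) = 1" by simp
  then have "max (absv (hom_eval P1 d 1 0)) (absv (hom_eval Q1 d 1 0)) = 1"
    using hom by blast
  then show ?thesis by (simp only: hom_lead)
qed

lemma coeffF1: "absv (coeff (F1 b) k) \<le> max 1 (absv b)"
proof -
  have "absv (coeff (F1 b) k) = absv (coeff P1 k - b * coeff Q1 k)" by (simp only: coeff_diff coeff_smult)
  also have "\<dots> \<le> max (absv (coeff P1 k)) (absv (b * coeff Q1 k))" by (rule abs_diff_ultra)
  also have "\<dots> \<le> max 1 (absv b)"
  proof -
    have "absv (b * coeff Q1 k) \<le> absv b" using cQ1[of k] abs_nonneg[of b]
      unfolding abs_mult by (intro mult_left_le) auto
    then show ?thesis using cP1[of k] by (auto simp: max_def)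
  qed
  finally show ?thesis .
qed

lemma hsubst_z: "hsubst P Q [:0,1:] = P"
  by (simp add: hsubst_def)

lemma hsubst_lin: "hsubst P Q (lin b) = P - smult b Q"
  by (simp add: hsubst_def)

lemma fixed_eqs:
  assumes t: "berk t" and fx: "phi_act P Q absv (Some t) = Some t"
  shows "t Q1 \<noteq> 0" "t P1 = t [:0,1:] * t Q1" "\<And>b. t (F1 b) = t (lin b) * t Q1"
proof -
  have tQ: "t Q \<noteq> 0" using fx by (auto simp: phi_act_def split: if_splits)
  then have eq: "(\<lambda>h. t (hsubst P Q h) / t Q ^ degree h) = t" using fx by (simp add: phi_act_def)
  have ca: "absv c \<noteq> 0" using c0 abs_zero_iff by simp
  show "t Q1 \<noteq> 0" using tQ ca by (simp add: berk_smult[OF t])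
  have "t (hsubst P Q [:0,1:]) / t Q ^ degree [:0::'a,1:] = t [:0,1:]" using fun_cong[OF eq] by blast
  then have "t P = t [:0,1:] * t Q" using tQ by (simp add: hsubst_z field_simps)
  then show "t P1 = t [:0,1:] * t Q1" by (simp add: berk_smult[OF t])
  fix b
  have "t (hsubst P Q (lin b)) / t Q ^ degree (lin b) = t (lin b)" using fun_cong[OF eq] by blast
  then have "t (P - smult b Q) = t (lin b) * t Q" using tQ by (simp add: hsubst_lin field_simps)
  moreover have "F1 b = smult c (P - smult b Q)" by (simp add: smult_diff_right mult.commute)
  ultimately show "t (F1 b) = t (lin b) * t Q1" by (simp add: berk_smult[OF t])
qed

lemma none_fixed: "phi_act P Q absv None = None \<longleftrightarrow> degree Q < degree P"
  by (auto simp: phi_act_def type1_pt_def)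

lemma coeff_bounded_le1:
  assumes t: "berk t" "t [:0,1:] \<le> 1" and cf: "\<And>i. absv (coeff f i) \<le> 1"
  shows "t f \<le> 1"
  by (rule berk_coeff_bound[OF t]) (use cf in auto)

lemma const_power_poly: "[:a:] ^ n = [:a ^ n:]"
  by (induct n) (auto simp: one_pCons mult.commute)

lemma const_sum_poly: "[:sum g A:] = (\<Sum>x\<in>A. [:g x:])"
proof (induct A rule: infinite_finite_induct)
  case (insert x F)
  have "[:g x:] + [:sum g F:] = [:g x + sum g F:]" by simp
  then show ?case by (simp only: sum.insert[OF insert.hyps(1,2)] insert.hyps(3)[symmetric])
qed auto

lemma diff_at:
  assumes t: "berk t" "t [:0,1:] \<le> 1" and a: "absv a \<le> 1" and cf: "\<And>i. absv (coeff f i) \<le> 1"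
  shows "t (f - [:poly f a:]) \<le> t (lin a)"
proof -
  have e: "f - [:poly f a:] = (\<Sum>i\<le>degree f. smult (coeff f i) ([:0,1:] ^ i - [:a:] ^ i))"
  proof -
    have "[:poly f a:] = (\<Sum>i\<le>degree f. smult (coeff f i) ([:a:] ^ i))"
      by (simp add: poly_altdef const_power_poly const_sum_poly)
    moreover have "f = (\<Sum>i\<le>degree f. smult (coeff f i) ([:0,1:] ^ i))"
      using poly_as_sum_of_monoms[of f] by (simp add: monom_altdef)
    ultimately show ?thesis by (simp add: sum_subtractf smult_diff_right)
  qed
  have ta: "t [:a:] \<le> 1" using a berk_const[OF t(1)] by simp
  have trm: "t ([:0,1:] ^ i - [:a:] ^ i) \<le> t (lin a)" for i
  proof (cases i)
    case 0 then show ?thesis using berk_0[OF t(1)] berk_nonneg[OF t(1)] by simp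
  next
    case (Suc n)
    have "[:0,1:] ^ i - [:a:] ^ i = ([:0,1:] - [:a:]) * (\<Sum>p<Suc n. [:0,1:] ^ p * [:a:] ^ (n - p))"
      unfolding Suc by (rule diff_power_eq_sum)
    moreover have "t (\<Sum>p<Suc n. [:0,1:] ^ p * [:a:] ^ (n - p)) \<le> 1"
    proof (rule berk_sum_ultra[OF t(1)])
      fix p
      show "t ([:0,1:] ^ p * [:a:] ^ (n - p)) \<le> 1"
        using t ta berk_nonneg[OF t(1)]
        by (simp add: berk_mult[OF t(1)] berk_power[OF t(1)] power_le_one mult_le_one)
    qed simp
    moreover have "[:0,1:] - [:a:] = lin a" by simp
    ultimately show ?thesis using berk_nonneg[OF t(1)]
      by (simp add: berk_mult[OF t(1)] mult_left_le)
  qed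
  show ?thesis unfolding e
  proof (rule berk_sum_ultra[OF t(1)])
    fix i
    have "t (smult (coeff f i) ([:0,1:] ^ i - [:a:] ^ i)) = absv (coeff f i) * t ([:0,1:] ^ i - [:a:] ^ i)"
      by (simp add: berk_smult[OF t(1)])
    also have "\<dots> \<le> 1 * t (lin a)" using cf[of i] trm[of i] abs_nonneg berk_nonneg[OF t(1)]
      by (intro mult_mono) auto
    finally show "t (smult (coeff f i) ([:0,1:] ^ i - [:a:] ^ i)) \<le> t (lin a)" by simp
  qed (use berk_nonneg[OF t(1)] in auto)
qed

lemma tz_le1: assumes t: "berk t" and a: "absv a \<le> 1" "t (lin a) < 1" shows "t [:0,1:] \<le> 1"
proof -
  have "[:0,1:] = lin a + [:a:]" by simp
  then have "t [:0,1:] \<le> max (t (lin a)) (t [:a:])" using berk_ultra[OF t] by metis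
  then show ?thesis using a berk_const[OF t] by simp
qed

lemma max_disk:
  assumes t: "berk t" and a: "absv a \<le> 1" "t (lin a) < 1"
  shows "max (t P1) (t Q1) = 1"
proof -
  have tz: "t [:0,1:] \<le> 1" by (rule tz_le1[OF t a])
  have le: "t P1 \<le> 1" "t Q1 \<le> 1" using coeff_bounded_le1[OF t tz] cP1 cQ1 by auto
  have one: "t f = 1" if cf: "\<And>i. absv (coeff f i) \<le> 1" and fa: "absv (poly f a) = 1" for f
  proof -
    have "t (f - [:poly f a:]) < 1" using diff_at[OF t tz a(1) cf] a(2) by simp
    moreover have "t [:poly f a:] = 1" using fa berk_const[OF t] by simp
    ultimately have "t ((f - [:poly f a:]) + [:poly f a:]) = max (t (f - [:poly f a:])) (t [:poly f a:])"
      by (intro berk_strict[OF t]) simp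
    then show ?thesis using \<open>t [:poly f a:] = 1\<close> \<open>t (f - [:poly f a:]) < 1\<close> by simp
  qed
  show ?thesis
  proof (cases "absv (poly P1 a) = 1")
    case True then show ?thesis using one[OF cP1] le by simp
  next
    case False
    then have "absv (poly Q1 a) = 1" using red_pt[OF a(1)] by (auto simp: max_def split: if_splits)
    then show ?thesis using one[OF cQ1] le by simp
  qed
qed

lemma fixed_disk:
  assumes t: "berk t" and fx: "phi_act P Q absv (Some t) = Some t"
    and a: "absv a \<le> 1" "t (lin a) < 1"
  shows "t Q1 = 1" "\<And>b. t (F1 b) = t (lin b)"
proof -
  have tz: "t [:0,1:] \<le> 1" by (rule tz_le1[OF t a])
  have "t P1 \<le> t Q1" using fixed_eqs(2)[OF t fx] tz berk_nonneg[OF t, of Q1]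
      berk_nonneg[OF t, of "[:0,1:]"]
    by (simp add: mult_left_le_one_le)
  then show q: "t Q1 = 1" using max_disk[OF t a] by (simp add: max_def split: if_splits)
  fix b show "t (F1 b) = t (lin b)" using fixed_eqs(3)[OF t fx] q by simp
qed

lemma inf_bound:
  assumes t: "berk t" and R: "t [:0,1:] = R" "1 < R"
    and cf: "\<And>i. absv (coeff f i) \<le> 1" and df: "degree f \<le> d"
  shows "t f \<le> R ^ d" "absv (coeff f d) = 1 \<Longrightarrow> t f = R ^ d"
proof -
  have d1: "d \<ge> 1" using d2 by simp
  show le: "t f \<le> R ^ d"
  proof (rule berk_coeff_bound[OF t, of R])
    fix i assume i: "i \<le> degree f"
    have "absv (coeff f i) * R ^ i \<le> 1 * R ^ i"
      using R cf[of i] by (intro mult_right_mono) auto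
    also have "\<dots> \<le> R ^ d" using i df R by (simp add: power_increasing)
    finally show "absv (coeff f i) * R ^ i \<le> R ^ d" .
  qed (use R in auto)
  assume cd: "absv (coeff f d) = 1"
  define g where "g = f - monom (coeff f d) d"
  have dg: "degree g \<le> d - 1"
    by (rule degree_le) (use df d1 in \<open>auto simp: g_def coeff_monom coeff_eq_0\<close>)
  have tg: "t g \<le> R ^ (d - 1)"
  proof (rule berk_coeff_bound[OF t, of R])
    fix i assume i: "i \<le> degree g"
    have cg: "absv (coeff g i) \<le> 1"
    proof -
      have "absv (coeff g i) \<le> max (absv (coeff f i)) (absv (coeff (monom (coeff f d) d) i))"
        unfolding g_def coeff_diff by (rule abs_diff_ultra)
      also have "\<dots> \<le> 1" using cf[of i] cf[of d] by (simp add: coeff_monom)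
      finally show ?thesis .
    qed
    have "absv (coeff g i) * R ^ i \<le> 1 * R ^ i"
      using R cg by (intro mult_right_mono) auto
    also have "\<dots> \<le> R ^ (d - 1)" using i dg R by (simp add: power_increasing)
    finally show "absv (coeff g i) * R ^ i \<le> R ^ (d - 1)" .
  qed (use R in auto)
  have tm: "t (monom (coeff f d) d) = R ^ d"
    using cd R by (simp add: monom_altdef berk_smult[OF t] berk_power[OF t])
  have "R ^ (d - 1) < R ^ d" using R d1 by (intro power_strict_increasing) auto
  then have "t g \<noteq> t (monom (coeff f d) d)" using tg tm by simp
  then have "t (g + monom (coeff f d) d) = max (t g) (t (monom (coeff f d) d))"
    by (rule berk_strict[OF t])
  then show "t f = R ^ d" using tg tm \<open>R ^ (d - 1) < R ^ d\<close> by (simp add: g_def)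
qed

lemma fixed_inf:
  assumes t: "berk t" and fx: "phi_act P Q absv (Some t) = Some t"
    and R: "t [:0,1:] = R" "1 < R"
  shows "absv (coeff P1 d) = 1" "t Q1 = R ^ (d - 1)" "\<And>b. t (F1 b) = t (lin b) * R ^ (d - 1)"
proof -
  have d1: "d \<ge> 1" using d2 by simp
  have Rd: "R ^ d = R * R ^ (d - 1)" using d1 by (metis Suc_diff_1 less_le_trans zero_less_one power_Suc)
  have Rp: "0 < R ^ d" using R by simp
  have eq: "t P1 = R * t Q1" using fixed_eqs(2)[OF t fx] R by simp
  show p: "absv (coeff P1 d) = 1"
  proof (rule ccontr)
    assume "absv (coeff P1 d) \<noteq> 1"
    then have "absv (coeff Q1 d) = 1" using red_inf by (auto simp: max_def split: if_splits)
    then have "t Q1 = R ^ d" using inf_bound(2)[OF t R cQ1 dQ1] by simp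
    moreover have "t P1 \<le> R ^ d" using inf_bound(1)[OF t R cP1 dP1] .
    ultimately have "R * R ^ d \<le> 1 * R ^ d" using eq by simp
    then have "R \<le> 1" using Rp by (simp only: mult_le_cancel_right_pos)
    then show False using R by simp
  qed
  have "t P1 = R ^ d" using inf_bound(2)[OF t R cP1 dP1 p] .
  then have "R * t Q1 = R * R ^ (d - 1)" using eq Rd by simp
  then show q: "t Q1 = R ^ (d - 1)" using R by simp
  fix b show "t (F1 b) = t (lin b) * R ^ (d - 1)" using fixed_eqs(3)[OF t fx] q by simp
qed

end

context gr begin

lemma F_nz: "P - smult b Q \<noteq> 0"
proof
  assume "P - smult b Q = 0"
  then have PQ: "P = smult b Q" by simp
  then have "Q dvd P" by (simp add: dvd_smult)
  then have u: "is_unit Q" using cop by (intro coprime_common_divisor[OF cop]) auto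
  then have Q0: "Q \<noteq> 0" by auto
  then have "degree Q = 0" using u is_unit_iff_degree by blast
  then have "degree P = 0" using PQ by simp
  then show False using d2 \<open>degree Q = 0\<close> by (simp add: rdeg_def)
qed

lemma F1_eq: "F1 b = smult c (P - smult b Q)"
  by (simp add: smult_diff_right mult.commute)

lemma F1_nz: "F1 b \<noteq> 0" using F_nz c0 F1_eq by simp

lemma degF1: "degree (F1 b) = degree (P - smult b Q)" using F1_eq c0 by simp

lemma degF_le: "degree (P - smult b Q) \<le> d"
  using dP dQ by (intro degree_diff_le) auto

lemma factor_F1:
  obtains rs where "F1 b = smult (lead_coeff (F1 b)) (prod_list (map lin rs))"
    "length rs = degree (F1 b)"
  using split_poly[OF alg F1_nz[of b]] by blast

lemma roots_F:
  assumes rs: "F1 b = smult (lead_coeff (F1 b)) (prod_list (map lin rs))"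
  shows "poly (P - smult b Q) a = 0 \<longleftrightarrow> a \<in> set rs"
    and "order a (P - smult b Q) = count (mset rs) a"
proof -
  have l0: "lead_coeff (F1 b) \<noteq> 0" by (metis F1_nz leading_coeff_0_iff)
  have "poly (P - smult b Q) a = 0 \<longleftrightarrow> poly (F1 b) a = 0" using F1_eq c0 by simp
  also have "\<dots> \<longleftrightarrow> prod_list (map (\<lambda>r. a - r) rs) = 0"
  proof -
    define l where "l = lead_coeff (F1 b)"
    have rs': "F1 b = smult l (prod_list (map lin rs))" using rs l_def by simp
    have "poly (F1 b) a = l * prod_list (map (\<lambda>r. a - r) rs)" by (simp only: rs' poly_prod_lin)
    then show ?thesis using l0 l_def by simp
  qed
  also have "\<dots> \<longleftrightarrow> a \<in> set rs" by (auto simp: prod_list_zero_iff)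
  finally show "poly (P - smult b Q) a = 0 \<longleftrightarrow> a \<in> set rs" .
  have "order a (P - smult b Q) = order a (F1 b)" using F1_eq c0 by (simp add: order_smult)
  also have "\<dots> = count (mset rs) a" by (subst rs) (rule order_prod_lin[OF l0])
  finally show "order a (P - smult b Q) = count (mset rs) a" .
qed

lemma cnt_formula:
  assumes rs: "F1 b = smult (lead_coeff (F1 b)) (prod_list (map lin rs))"
  shows "cnt_pre P Q absv U b = length (filter (\<lambda>x. type1_pt absv x \<in> U) rs)
      + (if None \<in> U then d - degree (P - smult b Q) else 0)"
proof -
  define A where "A = {a. poly (P - smult b Q) a = 0 \<and> type1_pt absv a \<in> U}"
  have A: "A = {a \<in> set rs. type1_pt absv a \<in> U}" unfolding A_def using roots_F(1)[OF rs] by auto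
  have fA: "finite A" unfolding A by simp
  have "(\<Sum>a\<in>A. order a (P - smult b Q)) = (\<Sum>a\<in>A. count (mset rs) a)"
    using roots_F(2)[OF rs] by simp
  also have "\<dots> = length (filter (\<lambda>x. x \<in> A) rs)" by (rule sum_count_filter[OF fA])
  also have "filter (\<lambda>x. x \<in> A) rs = filter (\<lambda>x. type1_pt absv x \<in> U) rs"
    unfolding A by (intro filter_cong) auto
  finally show ?thesis unfolding cnt_pre_def A_def by simp
qed

lemma cnt_le: "cnt_pre P Q absv U b \<le> d"
proof -
  obtain rs where rs: "F1 b = smult (lead_coeff (F1 b)) (prod_list (map lin rs))"
    "length rs = degree (F1 b)" by (rule factor_F1)
  have "length (filter (\<lambda>x. type1_pt absv x \<in> U) rs) \<le> degree (P - smult b Q)"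
    using rs(2) degF1 length_filter_le[of _ rs] by simp
  then show ?thesis unfolding cnt_formula[OF rs(1)] using degF_le[of b] by auto
qed

lemma count_main:
  assumes tr: "totally_ramified P Q absv \<xi>" and U: "openin P1T U" "\<xi> \<in> U"
  shows "\<exists>b rs. F1 b = smult (lead_coeff (F1 b)) (prod_list (map lin rs))
     \<and> length rs = degree (F1 b) \<and> (\<forall>r\<in>set rs. type1_pt absv r \<in> U)
     \<and> (None \<notin> U \<longrightarrow> length rs = d)"
proof -
  let ?g = "\<lambda>U. SUP b. cnt_pre P Q absv U b"
  have "loc_mult P Q absv \<xi> \<le> ?g U"
    unfolding loc_mult_def by (rule cINF_lower) (use U in \<open>auto intro: bdd_belowI[of _ 0]\<close>)
  then have ge: "d \<le> ?g U" using tr unfolding totally_ramified_def by simp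
  have fin: "finite (range (cnt_pre P Q absv U))"
    using cnt_le by (auto simp: finite_nat_set_iff_bounded_le)
  have "?g U = Max (range (cnt_pre P Q absv U))" using fin by (simp add: cSup_eq_Max)
  then have "?g U \<in> range (cnt_pre P Q absv U)" using fin by simp
  then obtain b where b: "d \<le> cnt_pre P Q absv U b" using ge by auto
  obtain rs where rs: "F1 b = smult (lead_coeff (F1 b)) (prod_list (map lin rs))"
    "length rs = degree (F1 b)" by (rule factor_F1)
  have dF: "degree (P - smult b Q) \<le> d" by (rule degF_le)
  have cf: "cnt_pre P Q absv U b = length (filter (\<lambda>x. type1_pt absv x \<in> U) rs)
      + (if None \<in> U then d - degree (P - smult b Q) else 0)" by (rule cnt_formula[OF rs(1)])
  have lf: "length (filter (\<lambda>x. type1_pt absv x \<in> U) rs) \<le> length rs" by (rule length_filter_le)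
  have ge2: "length (filter (\<lambda>x. type1_pt absv x \<in> U) rs) \<ge> length rs"
    using b cf rs(2) degF1[of b] dF lf by (auto split: if_splits)
  have all: "\<forall>r\<in>set rs. type1_pt absv r \<in> U" using length_filter_all[OF ge2] by blast
  have "None \<notin> U \<longrightarrow> length rs = d" using b cf rs(2) degF1[of b] dF lf by auto
  then show ?thesis using rs all by blast
qed

lemma rho_props:
  assumes t: "berk t"
  shows "\<And>a. Inf (range (\<lambda>a. t (lin a))) \<le> t (lin a)"
    and "0 \<le> Inf (range (\<lambda>a. t (lin a)))"
    and "\<And>y. Inf (range (\<lambda>a. t (lin a))) < y \<Longrightarrow> \<exists>a. t (lin a) < y"
proof -
  have bb: "bdd_below (range (\<lambda>a. t (lin a)))" using berk_nonneg[OF t] by (intro bdd_belowI[of _ 0]) auto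
  show "\<And>a. Inf (range (\<lambda>a. t (lin a))) \<le> t (lin a)" using bb by (intro cInf_lower) auto
  show "0 \<le> Inf (range (\<lambda>a. t (lin a)))" using berk_nonneg[OF t] by (intro cInf_greatest) auto
  fix y assume "Inf (range (\<lambda>a. t (lin a))) < y"
  then show "\<exists>a. t (lin a) < y" using cInf_less_iff[OF _ bb] by auto
qed

lemma rho_pos:
  assumes t: "berk t" and nt: "\<And>x. t \<noteq> (\<lambda>f. absv (poly f x))"
  shows "0 < Inf (range (\<lambda>a. t (lin a)))"
proof (rule ccontr)
  let ?\<rho> = "Inf (range (\<lambda>a. t (lin a)))"
  assume "\<not> 0 < ?\<rho>"
  then have r0: "?\<rho> = 0" using rho_props(2)[OF t] by simp
  have "\<forall>n::nat. \<exists>a. t (lin a) < 1 / real (Suc n)"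
    using rho_props(3)[OF t] r0 by simp
  then obtain a where a: "\<And>n. t (lin (a n)) < 1 / real (Suc n)" by metis
  have dist: "absv (a m - a n) \<le> max (t (lin (a m))) (t (lin (a n)))" for m n
  proof -
    have "[:a m - a n:] = lin (a n) - lin (a m)" by simp
    then have "t [:a m - a n:] \<le> max (t (lin (a n))) (t (lin (a m)))"
      using berk_diff_ultra[OF t] by metis
    then show ?thesis using berk_const[OF t] by (simp add: max.commute)
  qed
  have small: "\<exists>N. \<forall>n\<ge>N. t (lin (a n)) < e" if e0: "e > 0" for e
  proof -
    obtain N where N: "inverse (real (Suc N)) < e" using reals_Archimedean[OF e0] by blast
    have "t (lin (a n)) < e" if "n \<ge> N" for n
    proof -
      have "1 / real (Suc n) \<le> 1 / real (Suc N)" using that by (simp add: frac_le)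
      then show ?thesis using a[of n] N by (simp add: inverse_eq_divide)
    qed
    then show ?thesis by blast
  qed
  have "\<exists>N. \<forall>m\<ge>N. \<forall>n\<ge>N. absv (a m - a n) < e" if e0: "e > 0" for e
  proof -
    obtain N where N: "\<forall>n\<ge>N. t (lin (a n)) < e" using small[OF e0] by blast
    have "absv (a m - a n) < e" if "m \<ge> N" "n \<ge> N" for m n
    proof -
      have "t (lin (a m)) < e" "t (lin (a n)) < e" using N that by auto
      then show ?thesis using dist[of m n] by simp
    qed
    then show ?thesis by blast
  qed
  then obtain L where L: "\<And>e. e > 0 \<Longrightarrow> \<exists>N. \<forall>n\<ge>N. absv (a n - L) < e"
    using compl unfolding complete_abs_def by blast
  have "t (lin L) < e" if e0: "e > 0" for e
  proof -
    obtain N1 where N1: "\<forall>n\<ge>N1. t (lin (a n)) < e" using small[OF e0] by blast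
    obtain N2 where N2: "\<forall>n\<ge>N2. absv (a n - L) < e" using L[OF e0] by blast
    define n where "n = max N1 N2"
    have "lin L = lin (a n) + [:a n - L:]" by simp
    then have "t (lin L) \<le> max (t (lin (a n))) (t [:a n - L:])" using berk_ultra[OF t] by metis
    moreover have "t (lin (a n)) < e" "absv (a n - L) < e" using N1 N2 by (auto simp: n_def)
    ultimately show ?thesis using berk_const[OF t] by simp
  qed
  then have "t (lin L) \<le> 0"
  proof -
    assume h: "\<And>e. e > 0 \<Longrightarrow> t (lin L) < e"
    show ?thesis
    proof (rule ccontr)
      assume "\<not> t (lin L) \<le> 0"
      then have "t (lin L) > 0" by simp
      from h[OF this] show False by simp
    qed
  qed
  then have "t (lin L) = 0" using berk_nonneg[OF t] by (simp add: order.antisym)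
  then show False using berk_zero_point[OF t] nt by blast
qed

end

context gr begin

lemma lin_le: "berk t \<Longrightarrow> t (lin r) \<le> max (t (lin x)) (absv (x - r))"
proof -
  assume t: "berk t"
  have "lin r = lin x + [:x - r:]" by simp
  then have "t (lin r) \<le> max (t (lin x)) (t [:x - r:])" using berk_ultra[OF t] by metis
  then show ?thesis using berk_const[OF t] by simp
qed

lemma lin_big: assumes t: "berk t" "t [:0,1:] < absv b" shows "t (lin b) = absv b"
proof -
  have "lin b = [:0,1:] + [:-b:]" by simp
  moreover have "t [:-b:] = absv b" using berk_const[OF t(1)] by simp
  ultimately show ?thesis using berk_strict[OF t(1), of "[:0,1:]" "[:-b:]"] t(2) by simp
qed

lemma type1_eval: "(\<lambda>f. absv (poly f x)) (lin r) = absv (x - r)" by simp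

lemma type1_in: "type1_pt absv x \<in> Some ` {s \<in> berkA1 absv. G s} \<longleftrightarrow> G (\<lambda>f. absv (poly f x))"
  using type1_berk unfolding type1_pt_def berk_def by auto

lemma lcF1: "absv (lead_coeff (F1 b)) \<le> max 1 (absv b)" by (rule coeffF1)

lemma F1_at0: assumes "F1 b = smult l (prod_list (map lin rs))"
  shows "absv l * prod_list (map (\<lambda>r. absv r) rs) \<le> max 1 (absv b)"
proof -
  have "poly (F1 b) 0 = l * prod_list (map (\<lambda>r. 0 - r) rs)" by (simp only: assms poly_prod_lin)
  moreover have "absv (prod_list (map (\<lambda>r. 0 - r) rs)) = prod_list (map (\<lambda>r. absv r) rs)"
    by (induct rs) (auto simp: abs_mult)
  ultimately have "absv (poly (F1 b) 0) = absv l * prod_list (map (\<lambda>r. absv r) rs)" by (simp add: abs_mult)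
  moreover have "absv (poly (F1 b) 0) \<le> max 1 (absv b)" by (simp only: poly_0_coeff_0 coeffF1)
  ultimately show ?thesis by simp
qed

lemma F1_berk: assumes t: "berk t" and "F1 b = smult l (prod_list (map lin rs))"
  shows "t (F1 b) = absv l * prod_list (map (\<lambda>r. t (lin r)) rs)"
  by (simp only: assms(2) berk_prod_lin[OF t])

lemma part1_disk:
  assumes t: "berk t" and fx: "phi_act P Q absv (Some t) = Some t"
    and tr: "totally_ramified P Q absv (Some t)" and nt: "\<And>x. t \<noteq> (\<lambda>f. absv (poly f x))"
    and a0: "absv a0 \<le> 1" "t (lin a0) < 1"
  shows False
proof -
  let ?\<rho> = "Inf (range (\<lambda>a. t (lin a)))"
  have rp: "0 < ?\<rho>" by (rule rho_pos[OF t nt])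
  have r1: "?\<rho> < 1" using rho_props(1)[OF t, of a0] a0 by simp
  have d1: "1 < d" using d2 by simp
  have tz: "t [:0,1:] \<le> 1" by (rule tz_le1[OF t a0])
  have fd: "\<And>b. t (F1 b) = t (lin b)" by (rule fixed_disk(2)[OF t fx a0])
  have "?\<rho> ^ d < ?\<rho> ^ 1" using rp r1 d1 by (intro power_strict_decreasing) auto
  then obtain r where r: "?\<rho> < r" "r < 1" "r ^ d < ?\<rho>"
    using choose_r[OF rp _ _ r1, of d] d1 by auto
  obtain c where c: "t (lin c) < r" using rho_props(3)[OF t r(1)] by blast
  define U where "U = Some ` {s \<in> berkA1 absv. s (lin c) < r}"
  have Uo: "openin P1T U" unfolding U_def by (rule open_Some[OF open_lt])
  have tU: "Some t \<in> U" unfolding U_def using t c berk_def by auto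
  have NU: "None \<notin> U" unfolding U_def by auto
  obtain b rs where rs: "F1 b = smult (lead_coeff (F1 b)) (prod_list (map lin rs))"
    "\<forall>x\<in>set rs. type1_pt absv x \<in> U" "length rs = d"
    using count_main[OF tr Uo tU] NU by blast
  let ?l = "lead_coeff (F1 b)"
  have rc: "absv (x - c) < r" if "x \<in> set rs" for x
    using rs(2) that unfolding U_def type1_in by simp
  have tl: "t (lin x) \<le> r" if "x \<in> set rs" for x
    using lin_le[OF t, of x c] rc[OF that] c abs_diff_sym[of c x] by simp
  have "t (F1 b) \<le> absv ?l * r ^ d"
  proof -
    have "prod_list (map (\<lambda>x. t (lin x)) rs) \<le> r ^ length rs"
      using tl berk_nonneg[OF t] by (intro prod_list_le_pow) auto
    then show ?thesis unfolding F1_berk[OF t rs(1)] rs(3) using abs_nonneg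
      by (intro mult_left_mono) auto
  qed
  then have main: "t (lin b) \<le> absv ?l * r ^ d" using fd by simp
  have rd1: "r ^ d < 1" using r r1 by simp
  show False
  proof (cases "absv b > 1")
    case True
    have "t (lin b) = absv b" using lin_big[OF t] tz True by simp
    moreover have "absv ?l \<le> absv b" using lcF1[of b] True by simp
    ultimately have "absv b \<le> absv b * r ^ d" using main r(1) rp
      by (smt (verit) mult_right_mono zero_le_power)
    then show False using rd1 True by (smt (verit) mult_left_le_one_le mult_le_cancel_left1)
  next
    case False
    then have "absv ?l \<le> 1" using lcF1[of b] by simp
    then have "t (lin b) \<le> r ^ d" using main abs_nonneg r rp
      by (smt (verit) mult_right_mono zero_le_power mult_left_le_one_le)
    then show False using rho_props(1)[OF t, of b] r(3) by simp
  qed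
qed

end

context gr begin

lemma abs_eq_of_close: "absv (u - v) < absv v \<Longrightarrow> absv u = absv v"
proof -
  assume h: "absv (u - v) < absv v"
  have "u = v + (u - v)" by simp
  then have "absv u = max (absv v) (absv (u - v))" using abs_strict[of v "u - v"] h by simp
  then show ?thesis using h by simp
qed

lemma part1_infA:
  assumes t: "berk t" and fx: "phi_act P Q absv (Some t) = Some t"
    and tr: "totally_ramified P Q absv (Some t)" and nt: "\<And>x. t \<noteq> (\<lambda>f. absv (poly f x))"
    and R: "t [:0,1:] = R" "1 < R" and c0': "t (lin c0) < R"
  shows False
proof -
  let ?\<rho> = "Inf (range (\<lambda>a. t (lin a)))"
  have rp: "0 < ?\<rho>" by (rule rho_pos[OF t nt])
  have rR: "?\<rho> < R" using rho_props(1)[OF t, of c0] c0' by simp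
  have d1: "1 < d" using d2 by simp
  have fi: "\<And>b. t (F1 b) = t (lin b) * R ^ (d - 1)" by (rule fixed_inf(3)[OF t fx R])
  define K where "K = ?\<rho> * R ^ (2 * d - 2)"
  have "?\<rho> ^ (d - 1) < R ^ (d - 1)" using rp rR d1 by (intro power_strict_mono) auto
  also have "\<dots> \<le> R ^ (2 * d - 2)" using R d1 by (intro power_increasing) auto
  finally have "?\<rho> * ?\<rho> ^ (d - 1) < ?\<rho> * R ^ (2 * d - 2)" using rp by simp
  moreover have "?\<rho> * ?\<rho> ^ (d - 1) = ?\<rho> ^ d" using d1 by (cases d) auto
  ultimately have "?\<rho> ^ d < K" unfolding K_def by simp
  then have "\<exists>r. ?\<rho> < r \<and> r < R \<and> r ^ d < K" using rp rR d1 by (intro choose_r) auto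
  then obtain r where r: "?\<rho> < r" "r < R" "r ^ d < K" by blast
  obtain c where c: "t (lin c) < r" using rho_props(3)[OF t r(1)] by blast
  have cR: "absv c = R"
  proof -
    have "[:c:] = [:0,1:] + (- lin c)" by simp
    moreover have "t (- lin c) = t (lin c)" by (rule berk_uminus[OF t])
    ultimately have "t [:c:] = max (t [:0,1:]) (t (- lin c))"
      using berk_strict[OF t, of "[:0,1:]" "- lin c"] R c r by simp
    then show ?thesis using berk_const[OF t] R c r \<open>t (- lin c) = t (lin c)\<close> by simp
  qed
  define U where "U = Some ` {s \<in> berkA1 absv. s (lin c) < r}"
  have Uo: "openin P1T U" unfolding U_def by (rule open_Some[OF open_lt])
  have tU: "Some t \<in> U" unfolding U_def using t c berk_def by auto
  have NU: "None \<notin> U" unfolding U_def by auto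
  obtain b rs where rs: "F1 b = smult (lead_coeff (F1 b)) (prod_list (map lin rs))"
    "\<forall>x\<in>set rs. type1_pt absv x \<in> U" "length rs = d"
    using count_main[OF tr Uo tU] NU by blast
  let ?l = "absv (lead_coeff (F1 b))"
  have rc: "absv (x - c) < r" if "x \<in> set rs" for x
    using rs(2) that unfolding U_def type1_in by simp
  have xR: "absv x = R" if "x \<in> set rs" for x
    using abs_eq_of_close[of x c] rc[OF that] r cR by simp
  have tl: "t (lin x) \<le> r" if "x \<in> set rs" for x
    using lin_le[OF t, of x c] rc[OF that] c abs_diff_sym[of c x] by simp
  have up: "t (F1 b) \<le> ?l * r ^ d"
  proof -
    have "prod_list (map (\<lambda>x. t (lin x)) rs) \<le> r ^ length rs"
      using tl berk_nonneg[OF t] by (intro prod_list_le_pow) auto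
    then show ?thesis unfolding F1_berk[OF t rs(1)] rs(3) using abs_nonneg
      by (intro mult_left_mono) auto
  qed
  have low: "?l * R ^ d \<le> max 1 (absv b)"
    using F1_at0[OF rs(1)] prod_list_eq_pow[of rs "\<lambda>x. absv x" R] xR rs(3) by simp
  have Rp: "0 < R" using R by simp
  have l0: "0 \<le> ?l" by (rule abs_nonneg)
  have Rdd: "R ^ (d - 1) * R ^ d = R * R ^ (2 * d - 2)"
  proof -
    obtain k where k: "d = Suc k" using d1 by (cases d) auto
    show ?thesis unfolding k by (simp add: power_add[symmetric] mult_2)
  qed
  show False
  proof (cases "absv b > R")
    case True
    have tb: "t (lin b) = absv b" using lin_big[OF t] R True by simp
    have lb: "?l * R ^ d \<le> absv b" using low True R by simp
    have "absv b * R ^ (d - 1) \<le> ?l * r ^ d" using up fi[of b] tb by simp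
    then have "absv b * R ^ (d - 1) * R ^ d \<le> ?l * R ^ d * r ^ d"
      using Rp by (simp add: mult.commute mult.left_commute)
    also have "\<dots> \<le> absv b * r ^ d" using lb r rp by (intro mult_right_mono) auto
    also have "\<dots> < absv b * R ^ d"
      using True Rp r rp d1 by (intro mult_strict_left_mono power_strict_mono) auto
    finally have "R ^ (d - 1) < 1" using True Rp by simp
    moreover have "1 \<le> R ^ (d - 1)" using R by simp
    ultimately show False by simp
  next
    case False
    have lb: "?l * R ^ d \<le> R" using low False R by simp
    have "?\<rho> * R ^ (d - 1) \<le> t (lin b) * R ^ (d - 1)"
      using rho_props(1)[OF t, of b] Rp by simp
    also have "\<dots> \<le> ?l * r ^ d" using up fi[of b] by simp
    finally have "?\<rho> * R ^ (d - 1) * R ^ d \<le> ?l * R ^ d * r ^ d"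
      using Rp by (simp add: mult.commute mult.left_commute)
    also have "\<dots> \<le> R * r ^ d" using lb r rp by (intro mult_right_mono) auto
    finally have f: "?\<rho> * R ^ (d - 1) * R ^ d \<le> R * r ^ d" .
    have "?\<rho> * R ^ (d - 1) * R ^ d = ?\<rho> * (R ^ (d - 1) * R ^ d)" by (simp only: mult.assoc)
    also have "\<dots> = ?\<rho> * (R * R ^ (2 * d - 2))" by (simp only: Rdd)
    also have "\<dots> = R * (?\<rho> * R ^ (2 * d - 2))" by (simp only: mult.left_commute)
    finally have e: "?\<rho> * R ^ (d - 1) * R ^ d = R * (?\<rho> * R ^ (2 * d - 2))" .
    have "R * (?\<rho> * R ^ (2 * d - 2)) \<le> R * r ^ d" using f by (simp only: e)
    then have "K \<le> r ^ d" using Rp unfolding K_def by simp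
    then show False using r(3) by simp
  qed
qed

lemma part1_infB:
  assumes t: "berk t" and fx: "phi_act P Q absv (Some t) = Some t"
    and tr: "totally_ramified P Q absv (Some t)"
    and R: "t [:0,1:] = R" "1 < R" and ge: "\<And>c. R \<le> t (lin c)"
  shows False
proof -
  have d1: "1 < d" using d2 by simp
  have Rp: "0 < R" using R by simp
  have fi: "\<And>b. t (F1 b) = t (lin b) * R ^ (d - 1)" by (rule fixed_inf(3)[OF t fx R])
  have tlin: "t (lin x) = max R (absv x)" for x
  proof (cases "absv x > R")
    case True then show ?thesis using lin_big[OF t] R by simp
  next
    case False
    have "lin x = [:0,1:] + [:-x:]" by simp
    then have "t (lin x) \<le> max (t [:0,1:]) (t [:-x:])" using berk_ultra[OF t] by metis
    then show ?thesis using ge[of x] False R berk_const[OF t] by simp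
  qed
  have "1 ^ (2 * d) < R ^ (d - 1)" using R d1 by simp
  then have "\<exists>k. 1 < k \<and> k < R \<and> k ^ (2 * d) < R ^ (d - 1)" using R d1 by (intro choose_r) auto
  then obtain \<kappa> where k: "1 < \<kappa>" "\<kappa> < R" "\<kappa> ^ (2 * d) < R ^ (d - 1)" by blast
  have kp: "0 < \<kappa>" using k by simp
  define U where "U = Some ` {s \<in> berkA1 absv. R / \<kappa> < s [:0,1:] \<and> s [:0,1:] < R * \<kappa>}"
  have Uo: "openin P1T U" unfolding U_def by (rule open_Some[OF open_sub])
  have "R / \<kappa> < R" using k Rp by (simp add: divide_less_eq)
  moreover have "R < R * \<kappa>" using k Rp by simp
  ultimately have tU: "Some t \<in> U" unfolding U_def using t R berk_def by auto
  have NU: "None \<notin> U" unfolding U_def by auto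
  obtain b rs where rs: "F1 b = smult (lead_coeff (F1 b)) (prod_list (map lin rs))"
    "\<forall>x\<in>set rs. type1_pt absv x \<in> U" "length rs = d"
    using count_main[OF tr Uo tU] NU by blast
  let ?l = "absv (lead_coeff (F1 b))"
  have xr: "R / \<kappa> < absv x \<and> absv x < R * \<kappa>" if "x \<in> set rs" for x
  proof -
    have "(\<lambda>f. absv (poly f x)) [:0,1:] = absv x" by simp
    then show ?thesis using rs(2) that unfolding U_def type1_in by simp
  qed
  have l0: "0 \<le> ?l" by (rule abs_nonneg)
  have up: "t (F1 b) \<le> ?l * (R * \<kappa>) ^ d"
  proof -
    have "prod_list (map (\<lambda>x. t (lin x)) rs) \<le> (R * \<kappa>) ^ length rs"
    proof (intro prod_list_le_pow conjI)
      fix x assume "x \<in> set rs"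
      then show "t (lin x) \<le> R * \<kappa>" using tlin[of x] xr[of x] \<open>R < R * \<kappa>\<close> by simp
    qed (rule berk_nonneg[OF t])
    then show ?thesis unfolding F1_berk[OF t rs(1)] rs(3) using l0 by (intro mult_left_mono) auto
  qed
  have low: "?l * (R / \<kappa>) ^ d \<le> max 1 (absv b)"
  proof -
    have "(R / \<kappa>) ^ length rs \<le> prod_list (map (\<lambda>x. absv x) rs)"
      using xr Rp kp by (intro prod_list_ge_pow) (auto intro: less_imp_le)
    then have "?l * (R / \<kappa>) ^ d \<le> ?l * prod_list (map (\<lambda>x. absv x) rs)"
      using rs(3) l0 by (intro mult_left_mono) auto
    then show ?thesis using F1_at0[OF rs(1)] by simp
  qed
  define Bm where "Bm = max R (absv b)"
  have Bm1: "max 1 (absv b) \<le> Bm" using R by (auto simp: Bm_def)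
  have Bmp: "0 < Bm" using Rp by (auto simp: Bm_def)
  have "Bm * R ^ (d - 1) = t (F1 b)" using fi[of b] tlin[of b] by (simp add: Bm_def)
  also have "\<dots> \<le> ?l * (R * \<kappa>) ^ d" by (rule up)
  also have "\<dots> = (?l * (R / \<kappa>) ^ d) * \<kappa> ^ (2 * d)"
  proof -
    have k2: "\<kappa> ^ (2 * d) = \<kappa> ^ d * \<kappa> ^ d" by (simp add: mult_2 power_add)
    have "(R / \<kappa>) ^ d * \<kappa> ^ d = R ^ d" using kp by (simp add: power_divide)
    then show ?thesis unfolding k2 by (simp add: power_mult_distrib mult.assoc[symmetric])
  qed
  also have "\<dots> \<le> Bm * \<kappa> ^ (2 * d)" using low Bm1 kp by (intro mult_right_mono) auto
  finally have "R ^ (d - 1) \<le> \<kappa> ^ (2 * d)" using Bmp by simp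
  then show False using k by simp
qed

end

context gr begin

lemma part1:
  assumes t: "berk t" and fx: "phi_act P Q absv (Some t) = Some t"
    and tr: "totally_ramified P Q absv (Some t)" and ng: "t \<noteq> gn absv"
  shows "\<exists>x. t = (\<lambda>f. absv (poly f x))"
proof (rule ccontr)
  assume "\<not> (\<exists>x. t = (\<lambda>f. absv (poly f x)))"
  then have nt: "\<And>x. t \<noteq> (\<lambda>f. absv (poly f x))" by blast
  show False
  proof (cases "t [:0,1:] \<le> 1")
    case True
    have "\<exists>a0. absv a0 \<le> 1 \<and> t (lin a0) < 1"
    proof (rule ccontr)
      assume "\<not> ?thesis"
      then have "\<And>a. absv a \<le> 1 \<Longrightarrow> t (lin a) \<ge> 1" by (meson not_less)
      then have "t = gn absv" using classify_gauss[OF alg t True] by blast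
      then show False using ng by simp
    qed
    then obtain a0 where "absv a0 \<le> 1" "t (lin a0) < 1" by blast
    then show False using part1_disk[OF t fx tr nt] by blast
  next
    case False
    define R where "R = t [:0,1:]"
    have R: "t [:0,1:] = R" "1 < R" using False by (auto simp: R_def)
    show False
    proof (cases "\<exists>c0. t (lin c0) < R")
      case True
      then obtain c0 where "t (lin c0) < R" by blast
      then show False using part1_infA[OF t fx tr nt R] by blast
    next
      case False
      then have "\<And>c. R \<le> t (lin c)" by (meson not_less)
      then show False using part1_infB[OF t fx tr R] by blast
    qed
  qed
qed

lemma deg_none:
  assumes "degree Q < degree P"
  shows "degree P = d" "coeff Q1 d = 0" "coeff P1 d \<noteq> 0 \<Longrightarrow> lead_coeff (F1 b) = coeff P1 d"
    "coeff P1 d \<noteq> 0 \<Longrightarrow> degree (F1 b) = d"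
proof -
  show dp: "degree P = d" using assms by (simp add: rdeg_def)
  show cq: "coeff Q1 d = 0" using assms dp by (simp add: coeff_eq_0)
  assume cp: "coeff P1 d \<noteq> 0"
  have cf: "coeff (F1 b) d = coeff P1 d" using cq by simp
  have "degree (F1 b) \<le> d" using dP1 dQ1 by (intro degree_diff_le) auto
  moreover have "degree (F1 b) \<ge> d" by (rule le_degree) (use cf cp in metis)
  ultimately show df: "degree (F1 b) = d" by simp
  show "lead_coeff (F1 b) = coeff P1 d" using df cf by simp
qed

lemma part2_disk:
  assumes x0: "absv x0 \<le> 1"
    and fx0: "phi_act P Q absv (type1_pt absv x0) = type1_pt absv x0"
    and tr: "totally_ramified P Q absv (type1_pt absv x0)"
    and t: "berk t" and fx: "phi_act P Q absv (Some t) = Some t" and tx: "t (lin x0) < 1"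
  shows "t = (\<lambda>f. absv (poly f x0))"
proof (rule ccontr)
  assume ne: "t \<noteq> (\<lambda>f. absv (poly f x0))"
  define s0 where "s0 = (\<lambda>f. absv (poly f x0))"
  have s0: "berk s0" unfolding s0_def by (rule type1_berk)
  have fs0: "phi_act P Q absv (Some s0) = Some s0" using fx0 by (simp add: type1_pt_def s0_def)
  have s0l: "s0 (lin r) = absv (x0 - r)" for r by (simp add: s0_def)
  have fd0: "\<And>b. s0 (F1 b) = s0 (lin b)" by (rule fixed_disk(2)[OF s0 fs0 x0]) (simp add: s0l)
  have fd: "\<And>b. t (F1 b) = t (lin b)" by (rule fixed_disk(2)[OF t fx x0 tx])
  have tz: "t [:0,1:] \<le> 1" by (rule tz_le1[OF t x0 tx])
  define \<delta> where "\<delta> = t (lin x0)"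
  have dp: "0 < \<delta>"
  proof -
    have "\<delta> \<noteq> 0" using berk_zero_point[OF t] ne unfolding \<delta>_def by blast
    then show ?thesis using berk_nonneg[OF t] unfolding \<delta>_def by (simp add: order_less_le)
  qed
  have d1: "1 < d" using d2 by simp
  define U where "U = Some ` {s \<in> berkA1 absv. s (lin x0) < \<delta>}"
  have Uo: "openin P1T U" unfolding U_def by (rule open_Some[OF open_lt])
  have tU: "type1_pt absv x0 \<in> U" unfolding U_def type1_in using dp by simp
  have NU: "None \<notin> U" unfolding U_def by auto
  obtain b rs where rs: "F1 b = smult (lead_coeff (F1 b)) (prod_list (map lin rs))"
    "\<forall>x\<in>set rs. type1_pt absv x \<in> U" "length rs = d"
    using count_main[OF tr Uo tU] NU by blast
  let ?l = "absv (lead_coeff (F1 b))"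
  have rc: "absv (x - x0) < \<delta>" if "x \<in> set rs" for x
    using rs(2) that unfolding U_def type1_in by simp
  have l0: "0 \<le> ?l" by (rule abs_nonneg)
  have tl: "t (lin x) \<le> \<delta>" if "x \<in> set rs" for x
    using lin_le[OF t, of x x0] rc[OF that] abs_diff_sym[of x0 x] by (simp add: \<delta>_def)
  have up: "t (F1 b) \<le> ?l * \<delta> ^ d"
  proof -
    have "prod_list (map (\<lambda>x. t (lin x)) rs) \<le> \<delta> ^ length rs"
      using tl berk_nonneg[OF t] by (intro prod_list_le_pow) auto
    then show ?thesis unfolding F1_berk[OF t rs(1)] rs(3) using l0 by (intro mult_left_mono) auto
  qed
  have up0: "s0 (F1 b) \<le> ?l * \<delta> ^ d"
  proof -
    have "prod_list (map (\<lambda>x. s0 (lin x)) rs) \<le> \<delta> ^ length rs"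
    proof (rule prod_list_le_pow)
      fix x assume x: "x \<in> set rs"
      have "s0 (lin x) = absv (x - x0)" using s0l[of x] abs_diff_sym[of x0 x] by simp
      then show "0 \<le> s0 (lin x) \<and> s0 (lin x) \<le> \<delta>" using rc[OF x] abs_nonneg[of "x - x0"] by simp
    qed
    then show ?thesis unfolding F1_berk[OF s0 rs(1)] rs(3) using l0 by (intro mult_left_mono) auto
  qed
  have d1': "\<delta> < 1" using tx \<delta>_def by simp
  have dd: "\<delta> ^ d < \<delta>" using dp d1' d1 power_strict_decreasing[of 1 d \<delta>] by simp
  show False
  proof (cases "absv b > 1")
    case True
    have "t (lin b) = absv b" using lin_big[OF t] tz True by simp
    moreover have "?l \<le> absv b" using lcF1[of b] True by simp
    ultimately have "absv b \<le> absv b * \<delta> ^ d" using up fd[of b] dp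
      by (smt (verit) mult_right_mono zero_le_power)
    moreover have "absv b * \<delta> ^ d < absv b * 1" using True dd d1' dp
      by (intro mult_strict_left_mono) auto
    ultimately show False by simp
  next
    case False
    then have l1: "?l \<le> 1" using lcF1[of b] by simp
    have "?l * \<delta> ^ d \<le> \<delta> ^ d" using l1 dp by (simp add: mult_left_le_one_le)
    then have a1: "t (lin b) \<le> \<delta> ^ d" and a2: "absv (x0 - b) \<le> \<delta> ^ d"
      using up fd[of b] up0 fd0[of b] s0l[of b] by auto
    have "lin x0 = lin b + [:b - x0:]" by simp
    then have "\<delta> \<le> max (t (lin b)) (t [:b - x0:])" unfolding \<delta>_def using berk_ultra[OF t] by metis
    then have "\<delta> \<le> \<delta> ^ d" using a1 a2 berk_const[OF t] abs_diff_sym[of x0 b] by simp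
    then show False using dd by simp
  qed
qed

end

context gr begin

lemma s0_facts:
  assumes fx0: "phi_act P Q absv (type1_pt absv x0) = type1_pt absv x0" and X: "1 < absv x0"
  shows "absv (coeff P1 d) = 1" "\<And>b. absv (poly (F1 b) x0) = absv (x0 - b) * absv x0 ^ (d - 1)"
proof -
  define s0 where "s0 = (\<lambda>f. absv (poly f x0))"
  have s0: "berk s0" unfolding s0_def by (rule type1_berk)
  have fs0: "phi_act P Q absv (Some s0) = Some s0" using fx0 by (simp add: type1_pt_def s0_def)
  have R: "s0 [:0,1:] = absv x0" "1 < absv x0" using X by (auto simp: s0_def)
  show "absv (coeff P1 d) = 1" by (rule fixed_inf(1)[OF s0 fs0 R])
  fix b show "absv (poly (F1 b) x0) = absv (x0 - b) * absv x0 ^ (d - 1)"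
    using fixed_inf(3)[OF s0 fs0 R, of b] by (simp add: s0_def)
qed

lemma type1_prod: "F1 b = smult l (prod_list (map lin rs)) \<Longrightarrow>
    absv (poly (F1 b) x) = absv l * prod_list (map (\<lambda>r. absv (x - r)) rs)"
  using F1_berk[OF type1_berk[of x]] by simp

lemma part2_infnone:
  assumes X: "1 < absv x0"
    and fx0: "phi_act P Q absv (type1_pt absv x0) = type1_pt absv x0"
    and tr: "totally_ramified P Q absv (type1_pt absv x0)"
    and nf: "phi_act P Q absv None = None"
  shows False
proof -
  have dq: "degree Q < degree P" using nf none_fixed by simp
  have d1: "1 < d" using d2 by simp
  have cP: "absv (coeff P1 d) = 1" by (rule s0_facts(1)[OF fx0 X])
  have cP0: "coeff P1 d \<noteq> 0" using cP by auto
  define U where "U = Some ` {s \<in> berkA1 absv. s (lin x0) < 1}"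
  have Uo: "openin P1T U" unfolding U_def by (rule open_Some[OF open_lt])
  have tU: "type1_pt absv x0 \<in> U" unfolding U_def type1_in by simp
  have NU: "None \<notin> U" unfolding U_def by auto
  obtain b rs where rs: "F1 b = smult (lead_coeff (F1 b)) (prod_list (map lin rs))"
    "\<forall>x\<in>set rs. type1_pt absv x \<in> U" "length rs = d"
    using count_main[OF tr Uo tU] NU by blast
  have l1: "absv (lead_coeff (F1 b)) = 1" using deg_none(3)[OF dq cP0] cP by simp
  have rc: "absv (x - x0) < 1" if "x \<in> set rs" for x
    using rs(2) that unfolding U_def type1_in by simp
  have xX: "absv x = absv x0" if "x \<in> set rs" for x
    using abs_eq_of_close[of x x0] rc[OF that] X by simp
  have "absv x0 ^ d \<le> max 1 (absv b)"
    using F1_at0[OF rs(1)] prod_list_eq_pow[of rs "\<lambda>x. absv x" "absv x0"] xX rs(3) l1 by simp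
  moreover have "absv x0 < absv x0 ^ d" using X d1
    by (metis power_one_right power_strict_increasing)
  ultimately have bX: "absv x0 < absv b" using X by (simp add: max_def split: if_splits)
  have "absv (x0 - b) = absv b" using abs_strict_diff[of x0 b] bX by simp
  moreover have "absv (poly (F1 b) x0) \<le> 1"
  proof -
    have "prod_list (map (\<lambda>r. absv (x0 - r)) rs) \<le> 1 ^ length rs"
    proof (rule prod_list_le_pow)
      fix x assume x: "x \<in> set rs"
      show "0 \<le> absv (x0 - x) \<and> absv (x0 - x) \<le> 1"
        using rc[OF x] abs_diff_sym[of x0 x] abs_nonneg[of "x0 - x"] by simp
    qed
    then show ?thesis using type1_prod[OF rs(1), of x0] l1 by simp
  qed
  ultimately have "absv b * absv x0 ^ (d - 1) \<le> 1" using s0_facts(2)[OF fx0 X, of b] by simp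
  moreover have "1 \<le> absv x0 ^ (d - 1)" using X by simp
  moreover have "1 < absv b" using bX X by simp
  ultimately show False by (smt (verit) mult_less_cancel_left1 mult_le_cancel_left1)
qed

lemma part2_none:
  assumes nf: "phi_act P Q absv None = None"
    and tr: "totally_ramified P Q absv None"
    and t: "berk t" and fx: "phi_act P Q absv (Some t) = Some t" and T: "t [:0,1:] = T" "1 < T"
  shows False
proof -
  have dq: "degree Q < degree P" using nf none_fixed by simp
  have d1: "1 < d" using d2 by simp
  have cP: "absv (coeff P1 d) = 1" by (rule fixed_inf(1)[OF t fx T])
  have cP0: "coeff P1 d \<noteq> 0" using cP by auto
  have fi: "\<And>b. t (F1 b) = t (lin b) * T ^ (d - 1)" by (rule fixed_inf(3)[OF t fx T])
  define M where "M = T + 1"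
  define U where "U = insert None (Some ` {s \<in> berkA1 absv. M < s [:0,1:]})"
  have Uo: "openin P1T U" unfolding U_def by (rule open_inf_nbhd)
  have NU: "None \<in> U" unfolding U_def by auto
  obtain b rs where rs: "F1 b = smult (lead_coeff (F1 b)) (prod_list (map lin rs))"
    "length rs = degree (F1 b)" "\<forall>x\<in>set rs. type1_pt absv x \<in> U"
    using count_main[OF tr Uo NU] by blast
  have l1: "absv (lead_coeff (F1 b)) = 1" using deg_none(3)[OF dq cP0] cP by simp
  have len: "length rs = d" using rs(2) deg_none(4)[OF dq cP0] by simp
  have xM: "M < absv x" if "x \<in> set rs" for x
  proof -
    have "type1_pt absv x \<in> Some ` {s \<in> berkA1 absv. M < s [:0,1:]}"
      using rs(3) that unfolding U_def by (auto simp: type1_pt_def)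
    then show ?thesis unfolding type1_in by simp
  qed
  have tl: "t (lin x) = absv x" if "x \<in> set rs" for x
    using lin_big[OF t] xM[OF that] T by (simp add: M_def)
  define PP where "PP = prod_list (map (\<lambda>x. absv x) rs)"
  have tF: "t (F1 b) = PP"
    unfolding F1_berk[OF t rs(1)] l1 PP_def using tl by (simp cong: map_cong)
  have "M ^ length rs \<le> PP" unfolding PP_def using xM T
    by (intro prod_list_ge_pow) (auto simp: M_def intro: less_imp_le)
  moreover have "M ^ 1 \<le> M ^ length rs" using len d1 T by (intro power_increasing) (auto simp: M_def)
  ultimately have PM: "M \<le> PP" by simp
  have Pb: "PP \<le> max 1 (absv b)" using F1_at0[OF rs(1)] l1 by (simp add: PP_def)
  then have bT: "T < absv b" using PM T by (simp add: M_def max_def split: if_splits)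
  have "t (lin b) = absv b" using lin_big[OF t] bT T by simp
  then have "PP = absv b * T ^ (d - 1)" using tF fi[of b] by simp
  moreover have "PP \<le> absv b" using Pb bT T by simp
  moreover have "1 < T ^ (d - 1)" using T d1 by simp
  moreover have "0 < absv b" using bT T by simp
  ultimately show False by (smt (verit) mult_less_cancel_left1)
qed

end

context gr begin

lemma part2_infpt:
  assumes X: "1 < absv x0"
    and fx0: "phi_act P Q absv (type1_pt absv x0) = type1_pt absv x0"
    and tr: "totally_ramified P Q absv (type1_pt absv x0)"
    and t: "berk t" and fx: "phi_act P Q absv (Some t) = Some t" and T: "t [:0,1:] = T" "1 < T"
  shows "t = (\<lambda>f. absv (poly f x0))"
proof (rule ccontr)
  assume ne: "t \<noteq> (\<lambda>f. absv (poly f x0))"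
  define Xa where "Xa = absv x0"
  have X1: "1 < Xa" using X by (simp add: Xa_def)
  have d1: "1 < d" using d2 by simp
  have fi: "\<And>b. t (F1 b) = t (lin b) * T ^ (d - 1)" by (rule fixed_inf(3)[OF t fx T])
  define \<delta> where "\<delta> = t (lin x0)"
  have dp: "0 < \<delta>"
  proof -
    have "\<delta> \<noteq> 0" using berk_zero_point[OF t] ne unfolding \<delta>_def by blast
    then show ?thesis using berk_nonneg[OF t] unfolding \<delta>_def by (simp add: order_less_le)
  qed
  define \<epsilon> where "\<epsilon> = min \<delta> 1"
  have ep: "0 < \<epsilon>" "\<epsilon> \<le> \<delta>" "\<epsilon> \<le> 1" using dp by (auto simp: \<epsilon>_def)
  define U where "U = Some ` {s \<in> berkA1 absv. s (lin x0) < \<epsilon>}"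
  have Uo: "openin P1T U" unfolding U_def by (rule open_Some[OF open_lt])
  have tU: "type1_pt absv x0 \<in> U" unfolding U_def type1_in using ep by simp
  have NU: "None \<notin> U" unfolding U_def by auto
  obtain b rs where rs: "F1 b = smult (lead_coeff (F1 b)) (prod_list (map lin rs))"
    "\<forall>x\<in>set rs. type1_pt absv x \<in> U" "length rs = d"
    using count_main[OF tr Uo tU] NU by blast
  define l where "l = absv (lead_coeff (F1 b))"
  have l0: "0 \<le> l" unfolding l_def by (rule abs_nonneg)
  have rc: "absv (x - x0) < \<epsilon>" if "x \<in> set rs" for x
    using rs(2) that unfolding U_def type1_in by simp
  have xX: "absv x = Xa" if "x \<in> set rs" for x
    using abs_eq_of_close[of x x0] rc[OF that] X ep by (simp add: Xa_def)
  have i: "l * Xa ^ d \<le> max 1 (absv b)"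
    using F1_at0[OF rs(1)] prod_list_eq_pow[of rs "\<lambda>x. absv x" Xa] xX rs(3) by (simp add: l_def)
  have ii: "absv (x0 - b) * Xa ^ (d - 1) \<le> l * \<epsilon> ^ d"
  proof -
    have "prod_list (map (\<lambda>r. absv (x0 - r)) rs) \<le> \<epsilon> ^ length rs"
    proof (rule prod_list_le_pow)
      fix x assume x: "x \<in> set rs"
      show "0 \<le> absv (x0 - x) \<and> absv (x0 - x) \<le> \<epsilon>"
        using rc[OF x] abs_diff_sym[of x0 x] abs_nonneg[of "x0 - x"] by simp
    qed
    then have "absv (poly (F1 b) x0) \<le> l * \<epsilon> ^ d"
      using type1_prod[OF rs(1), of x0] rs(3) l0 by (simp add: l_def mult_left_mono)
    then show ?thesis using s0_facts(2)[OF fx0 X, of b] by (simp add: Xa_def)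
  qed
  have iii: "t (lin b) * T ^ (d - 1) \<le> l * \<delta> ^ d"
  proof -
    have "prod_list (map (\<lambda>x. t (lin x)) rs) \<le> \<delta> ^ length rs"
    proof (rule prod_list_le_pow)
      fix x assume x: "x \<in> set rs"
      have "t (lin x) \<le> max \<delta> (absv (x0 - x))" using lin_le[OF t, of x x0] by (simp add: \<delta>_def)
      then show "0 \<le> t (lin x) \<and> t (lin x) \<le> \<delta>"
        using rc[OF x] abs_diff_sym[of x0 x] ep berk_nonneg[OF t] by simp
    qed
    then have e2: "l * prod_list (map (\<lambda>x. t (lin x)) rs) \<le> l * \<delta> ^ d"
      using rs(3) l0 by (metis mult_left_mono)
    have e1: "t (lin b) * T ^ (d - 1) = l * prod_list (map (\<lambda>x. t (lin x)) rs)"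
      using fi[of b] F1_berk[OF t rs(1)] unfolding l_def by metis
    show ?thesis using e1 e2 by linarith
  qed
  have Xd: "1 < Xa ^ d" using X1 d1 by simp
  have Xd1: "1 < Xa ^ (d - 1)" using X1 d1 by simp
  have Xsplit: "Xa ^ d = Xa * Xa ^ (d - 1)" using d1 by (cases d) auto
  have Xp: "0 < Xa" using X1 by simp
  have edle: "\<epsilon> ^ d \<le> 1" using ep by (simp add: power_le_one)
  show False
  proof (cases "absv b \<le> 1")
    case True
    have "absv (x0 - b) = Xa" using abs_strict_diff[of x0 b] True X by (simp add: Xa_def)
    then have a: "Xa ^ d \<le> l * \<epsilon> ^ d" using ii Xsplit by simp
    have b': "l * Xa ^ d \<le> 1" using i True by simp
    have "Xa ^ d * Xa ^ d \<le> l * \<epsilon> ^ d * Xa ^ d" using a Xp by (simp add: mult_right_mono)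
    also have "\<dots> = (l * Xa ^ d) * \<epsilon> ^ d" by (simp add: mult_ac)
    also have "\<dots> \<le> 1 * 1" using b' edle ep l0 by (intro mult_mono) auto
    finally have "Xa ^ d * Xa ^ d \<le> 1" by simp
    moreover have "1 < Xa ^ d * Xa ^ d" using Xd by (auto intro: less_1_mult)
    ultimately show False by simp
  next
    case False
    then have b1: "1 < absv b" by simp
    have ib: "l * Xa ^ d \<le> absv b" using i b1 by simp
    show False
    proof (cases "absv b = Xa")
      case False
      have "absv (x0 - b) = max Xa (absv b)" using abs_strict_diff[of x0 b] False by (simp add: Xa_def)
      then have "absv b \<le> absv (x0 - b)" by simp
      then have "absv b * Xa ^ (d - 1) \<le> absv (x0 - b) * Xa ^ (d - 1)" using Xd1 by (intro mult_right_mono) auto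
      then have "absv b * Xa ^ (d - 1) \<le> l * \<epsilon> ^ d" using ii by linarith
      then have "absv b * Xa ^ (d - 1) * Xa ^ d \<le> l * \<epsilon> ^ d * Xa ^ d" using Xp by (simp add: mult_right_mono)
      also have "\<dots> = (l * Xa ^ d) * \<epsilon> ^ d" by (simp add: mult_ac)
      also have "\<dots> \<le> absv b * 1" using ib edle ep l0 abs_nonneg[of b] by (intro mult_mono) auto
      finally have "absv b * (Xa ^ (d - 1) * Xa ^ d) \<le> absv b * 1" by (simp add: mult_ac)
      then have "Xa ^ (d - 1) * Xa ^ d \<le> 1" using b1 by simp
      moreover have "1 < Xa ^ (d - 1) * Xa ^ d" using Xd Xd1 by (auto intro: less_1_mult)
      ultimately show False by simp
    next
      case True
      have lX: "l * Xa ^ (d - 1) \<le> 1"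
      proof -
        have "Xa * (l * Xa ^ (d - 1)) \<le> Xa * 1" using ib True Xsplit by (simp add: mult_ac)
        then show ?thesis using Xp by simp
      qed
      have "lin x0 = lin b + [:b - x0:]" by simp
      then have "\<delta> \<le> max (t (lin b)) (t [:b - x0:])" unfolding \<delta>_def using berk_ultra[OF t] by metis
      then have dm: "\<delta> \<le> max (t (lin b)) (absv (x0 - b))" using berk_const[OF t] abs_diff_sym[of b x0] by simp
      show False
      proof (cases "\<delta> \<le> t (lin b)")
        case True
        have Tp: "0 < T" using T by simp
        have "\<delta> * T ^ (d - 1) \<le> t (lin b) * T ^ (d - 1)" using True Tp by (intro mult_right_mono) auto
        then have "\<delta> * T ^ (d - 1) \<le> l * \<delta> ^ d" using iii by linarith
        then have "\<delta> * T ^ (d - 1) * Xa ^ (d - 1) \<le> l * \<delta> ^ d * Xa ^ (d - 1)"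
          using Xp by (simp add: mult_right_mono)
        also have "\<dots> = (l * Xa ^ (d - 1)) * \<delta> ^ d" by (simp add: mult_ac)
        also have "\<dots> \<le> 1 * \<delta> ^ d" using lX dp by (intro mult_right_mono) auto
        also have "\<dots> = \<delta> * \<delta> ^ (d - 1)" using d1 by (metis Suc_diff_1 less_trans zero_less_one power_Suc mult_1)
        finally have f: "\<delta> * T ^ (d - 1) * Xa ^ (d - 1) \<le> \<delta> * \<delta> ^ (d - 1)" .
        have g: "\<delta> * (T * Xa) ^ (d - 1) \<le> \<delta> * \<delta> ^ (d - 1)"
          using f by (simp only: power_mult_distrib mult.assoc)
        have h: "(T * Xa) ^ (d - 1) \<le> \<delta> ^ (d - 1)" using g dp by (simp only: mult_le_cancel_left_pos)
        obtain k where k: "d - 1 = Suc k" using d1 by (cases "d - 1") auto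
        have tx: "T * Xa \<le> \<delta>" by (rule power_le_imp_le_base[OF h[unfolded k]]) (use dp in simp)
        have "lin x0 = [:0,1:] + [:-x0:]" by simp
        then have "\<delta> \<le> max (t [:0,1:]) (t [:-x0:])" unfolding \<delta>_def using berk_ultra[OF t] by metis
        then have dm2: "\<delta> \<le> max T Xa" using T berk_const[OF t] by (simp add: Xa_def)
        have "T < T * Xa" using T X1 by simp
        moreover have "Xa < T * Xa" using T X1 by simp
        ultimately have "max T Xa < T * Xa" by simp
        then show False using tx dm2 by linarith
      next
        case False
        then have dx: "\<delta> \<le> absv (x0 - b)" using dm by simp
        have "\<delta> * Xa ^ (d - 1) \<le> absv (x0 - b) * Xa ^ (d - 1)" using dx Xd1 by (intro mult_right_mono) auto
        then have "\<delta> * Xa ^ (d - 1) \<le> l * \<epsilon> ^ d" using ii by linarith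
        then have "\<delta> * Xa ^ (d - 1) * Xa ^ (d - 1) \<le> l * \<epsilon> ^ d * Xa ^ (d - 1)"
          using Xp by (simp add: mult_right_mono)
        also have "\<dots> = (l * Xa ^ (d - 1)) * \<epsilon> ^ d" by (simp add: mult_ac)
        also have "\<dots> \<le> 1 * \<epsilon> ^ d" using lX ep by (intro mult_right_mono) auto
        also have "\<dots> \<le> \<epsilon>" using power_decreasing[of 1 d \<epsilon>] ep d1 by simp
        also have "\<dots> \<le> \<delta>" by (rule ep(2))
        finally have "\<delta> * (Xa ^ (d - 1) * Xa ^ (d - 1)) \<le> \<delta> * 1" by (simp add: mult_ac)
        then have "Xa ^ (d - 1) * Xa ^ (d - 1) \<le> 1" using dp by simp
        moreover have "1 < Xa ^ (d - 1) * Xa ^ (d - 1)" using Xd1 by (auto intro: less_1_mult)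
        ultimately show False by simp
      qed
    qed
  qed
qed

end

context gr begin

definition "Dm a = Some ` {t \<in> berkA1 absv. t (lin a) < 1}"
definition "Rinf = insert None (Some ` {t \<in> berkA1 absv. 1 < t [:0,1:]})"
definition "Xs = berkP1 absv - {gauss_pt absv}"

lemma Dm_open: "openin P1T (Dm a)" unfolding Dm_def by (rule open_Some[OF open_lt])
lemma Rinf_open: "openin P1T Rinf" unfolding Rinf_def by (rule open_inf_nbhd)

lemma gauss_notin: "gauss_pt absv \<notin> Dm a" "gauss_pt absv \<notin> Rinf"
proof -
  have "1 \<le> gn absv (lin a)" using gn_ge[of "lin a" 1] by simp
  then show "gauss_pt absv \<notin> Dm a" unfolding Dm_def gauss_pt_gn by auto
  have "gn absv [:0,1:] \<le> 1" by (rule gn_le) (auto simp: coeff_pCons split: nat.splits)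
  then show "gauss_pt absv \<notin> Rinf" unfolding Rinf_def gauss_pt_gn by auto
qed

lemma Xs_cover: "Xs = Rinf \<union> (\<Union>a\<in>{a. absv a \<le> 1}. Dm a)"
proof
  show "Xs \<subseteq> Rinf \<union> (\<Union>a\<in>{a. absv a \<le> 1}. Dm a)"
  proof
    fix \<eta> assume e: "\<eta> \<in> Xs"
    show "\<eta> \<in> Rinf \<union> (\<Union>a\<in>{a. absv a \<le> 1}. Dm a)"
    proof (cases \<eta>)
      case None then show ?thesis by (simp add: Rinf_def)
    next
      case (Some t)
      then have t: "t \<in> berkA1 absv" "t \<noteq> gn absv" using e by (auto simp: Xs_def berkP1_def gauss_pt_gn)
      show ?thesis
      proof (cases "1 < t [:0,1:]")
        case True then show ?thesis using Some t by (simp add: Rinf_def)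
      next
        case False
        have "\<exists>a. absv a \<le> 1 \<and> t (lin a) < 1"
        proof (rule ccontr)
          assume "\<not> ?thesis"
          then have "\<And>a. absv a \<le> 1 \<Longrightarrow> 1 \<le> t (lin a)" by (meson not_less)
          then have "t = gn absv" using classify_gauss[OF alg _ _] t False by (simp add: berk_def)
          then show False using t by simp
        qed
        then show ?thesis using Some t by (auto simp: Dm_def)
      qed
    qed
  qed
  show "Rinf \<union> (\<Union>a\<in>{a. absv a \<le> 1}. Dm a) \<subseteq> Xs"
  proof
    fix \<eta> assume h: "\<eta> \<in> Rinf \<union> (\<Union>a\<in>{a. absv a \<le> 1}. Dm a)"
    then have "\<eta> \<in> berkP1 absv" by (auto simp: Rinf_def Dm_def berkP1_def)
    moreover have "\<eta> \<noteq> gauss_pt absv" using h gauss_notin by auto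
    ultimately show "\<eta> \<in> Xs" by (simp add: Xs_def)
  qed
qed

lemma Dm_Rinf: "absv a \<le> 1 \<Longrightarrow> Dm a \<inter> Rinf = {}"
  using tz_le1 unfolding Dm_def Rinf_def berk_def by (force)

lemma Dm_close: "absv a \<le> 1 \<Longrightarrow> t \<in> berkA1 absv \<Longrightarrow> t (lin a) < 1 \<Longrightarrow> absv (a - x0) < 1 \<Longrightarrow> t (lin x0) < 1"
  using lin_le[of t x0 a] unfolding berk_def by (simp add: abs_diff_sym)

lemma Dm_far: "t \<in> berkA1 absv \<Longrightarrow> t (lin a) < 1 \<Longrightarrow> t (lin x0) < 1 \<Longrightarrow> absv (a - x0) < 1"
proof -
  assume t: "t \<in> berkA1 absv" "t (lin a) < 1" "t (lin x0) < 1"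
  have "[:x0 - a:] = lin a - lin x0" by simp
  then have "t [:x0 - a:] \<le> max (t (lin a)) (t (lin x0))" using berk_diff_ultra[of t] t(1) berk_def by metis
  then show ?thesis using t berk_const[of t] berk_def abs_diff_sym[of x0 a] by simp
qed

lemma dir_sub:
  assumes "\<xi> \<in> W" "W \<union> V = Xs" "W \<inter> V = {}" "openin P1T W" "openin P1T V"
    and "\<eta> \<in> dir_disk absv (gauss_pt absv) \<xi>"
  shows "\<eta> \<in> W"
proof -
  have "connected_component_of (subtopology P1T Xs) \<xi> \<eta>"
    using assms(6) unfolding dir_disk_def Xs_def by simp
  then show ?thesis using conn_sep assms(1-5) by metis
qed

lemma dir_Dm:
  assumes x0: "absv x0 \<le> 1" and xi: "\<xi> \<in> Dm x0" and eta: "\<eta> \<in> dir_disk absv (gauss_pt absv) \<xi>"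
  shows "\<eta> \<in> Dm x0"
proof (rule dir_sub[OF xi _ _ Dm_open _ eta])
  define V where "V = Rinf \<union> (\<Union>a\<in>{a. absv a \<le> 1 \<and> 1 \<le> absv (a - x0)}. Dm a)"
  show "openin P1T V" unfolding V_def using Rinf_open Dm_open by (intro openin_Un openin_Union) auto
  show "Dm x0 \<union> V = Xs"
  proof
    show "Dm x0 \<union> V \<subseteq> Xs" unfolding Xs_cover V_def using x0 by auto
    show "Xs \<subseteq> Dm x0 \<union> V"
    proof
      fix \<eta>' assume "\<eta>' \<in> Xs"
      then consider "\<eta>' \<in> Rinf" | a where "absv a \<le> 1" "\<eta>' \<in> Dm a" unfolding Xs_cover by blast
      then show "\<eta>' \<in> Dm x0 \<union> V"
      proof cases
        case 1 then show ?thesis by (simp add: V_def)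
      next
        case 2
        show ?thesis
        proof (cases "absv (a - x0) < 1")
          case True
          then have "\<eta>' \<in> Dm x0" using 2 Dm_close[of a _ x0] by (auto simp: Dm_def)
          then show ?thesis by simp
        next
          case False then show ?thesis using 2 by (auto simp: V_def)
        qed
      qed
    qed
  qed
  show "Dm x0 \<inter> V = {}"
  proof -
    have "Dm x0 \<inter> Rinf = {}" by (rule Dm_Rinf[OF x0])
    moreover have "Dm x0 \<inter> Dm a = {}" if "1 \<le> absv (a - x0)" for a
      using Dm_far[of _ a x0] that by (force simp: Dm_def)
    ultimately show ?thesis unfolding V_def by auto
  qed
qed

lemma dir_Rinf:
  assumes xi: "\<xi> \<in> Rinf" and eta: "\<eta> \<in> dir_disk absv (gauss_pt absv) \<xi>"
  shows "\<eta> \<in> Rinf"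
proof (rule dir_sub[OF xi _ _ Rinf_open _ eta])
  define V where "V = (\<Union>a\<in>{a. absv a \<le> 1}. Dm a)"
  show "openin P1T V" unfolding V_def using Dm_open by (intro openin_Union) auto
  show "Rinf \<union> V = Xs" unfolding Xs_cover V_def ..
  show "Rinf \<inter> V = {}" unfolding V_def using Dm_Rinf by auto
qed

end

context gr begin

lemma main:
  assumes xiP: "\<xi> \<in> berkP1 absv" and ng: "\<xi> \<noteq> gauss_pt absv"
    and fx: "phi_act P Q absv \<xi> = \<xi>" and tr: "totally_ramified P Q absv \<xi>"
  shows "is_type1 absv \<xi> \<and>
         (\<forall>\<eta>\<in>dir_disk absv (gauss_pt absv) \<xi>. phi_act P Q absv \<eta> = \<eta> \<longrightarrow> \<eta> = \<xi>)"
proof -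
  have t1: "\<xi> = None \<or> (\<exists>x0. \<xi> = type1_pt absv x0)"
  proof (cases \<xi>)
    case (Some s)
    have s: "berk s" using xiP Some by (auto simp: berkP1_def berk_def)
    have "s \<noteq> gn absv" using ng Some by (auto simp: gauss_pt_gn)
    then obtain x where "s = (\<lambda>f. absv (poly f x))" using part1[OF s] fx tr Some by blast
    then show ?thesis using Some by (auto simp: type1_pt_def)
  qed simp
  have uniq: "\<eta> = \<xi>" if eta: "\<eta> \<in> dir_disk absv (gauss_pt absv) \<xi>" and fe: "phi_act P Q absv \<eta> = \<eta>" for \<eta>
  proof -
    from t1 show ?thesis
    proof
      assume N: "\<xi> = None"
      have "\<xi> \<in> Rinf" using N by (simp add: Rinf_def)
      then have "\<eta> \<in> Rinf" using dir_Rinf eta by blast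
      then show ?thesis
      proof (cases \<eta>)
        case None then show ?thesis using N by simp
      next
        case (Some t)
        then have t: "berk t" "1 < t [:0,1:]" using \<open>\<eta> \<in> Rinf\<close> by (auto simp: Rinf_def berk_def)
        have False using part2_none[of t] fx tr N t fe Some by blast
        then show ?thesis ..
      qed
    next
      assume "\<exists>x0. \<xi> = type1_pt absv x0"
      then obtain x0 where x0: "\<xi> = type1_pt absv x0" by blast
      have s0: "berk (\<lambda>f. absv (poly f x0))" by (rule type1_berk)
      show ?thesis
      proof (cases "absv x0 \<le> 1")
        case True
        have "\<xi> \<in> Dm x0" using x0 type1_berk by (auto simp: Dm_def type1_pt_def berk_def)
        then have "\<eta> \<in> Dm x0" using dir_Dm[OF True] eta by blast
        then obtain t where t: "\<eta> = Some t" "t \<in> berkA1 absv" "t (lin x0) < 1" by (auto simp: Dm_def)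
        have "t = (\<lambda>f. absv (poly f x0))"
          using part2_disk[OF True] fx tr x0 t fe berk_def by auto
        then show ?thesis using t x0 by (simp add: type1_pt_def)
      next
        case False
        then have X: "1 < absv x0" by simp
        have "\<xi> \<in> Rinf" using x0 type1_berk X by (auto simp: Rinf_def type1_pt_def berk_def)
        then have "\<eta> \<in> Rinf" using dir_Rinf eta by blast
        then show ?thesis
        proof (cases \<eta>)
          case None
          have False using part2_infnone[OF X] fx tr x0 fe None by simp
          then show ?thesis ..
        next
          case (Some t)
          then have t: "berk t" "1 < t [:0,1:]" using \<open>\<eta> \<in> Rinf\<close> by (auto simp: Rinf_def berk_def)
          have "t = (\<lambda>f. absv (poly f x0))"
            using part2_infpt[OF X _ _ t(1) _ refl t(2)] fx tr x0 fe Some by simp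
          then show ?thesis using Some x0 by (simp add: type1_pt_def)
        qed
      qed
    qed
  qed
  show ?thesis using t1 uniq unfolding is_type1_def by blast
qed

end

theorem lemma3p9:
  fixes absv :: "'a::field_char_0 \<Rightarrow> real"
    and P Q :: "'a poly"
    and \<xi> :: "'a seminorm option"
  assumes "CANA_field absv"
    and "coprime P Q"
    and "rdeg P Q \<ge> 2"
    and "good_reduction absv P Q"
    and "\<xi> \<in> berkP1 absv"
    and "\<xi> \<noteq> gauss_pt absv"
    and "phi_act P Q absv \<xi> = \<xi>"
    and "totally_ramified P Q absv \<xi>"
  shows "is_type1 absv \<xi> \<and>
         (\<forall>\<eta>\<in>dir_disk absv (gauss_pt absv) \<xi>. phi_act P Q absv \<eta> = \<eta> \<longrightarrow> \<eta> = \<xi>)"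
proof -
  have na: "nonarch_abs absv" and alg: "alg_closed TYPE('a)" and compl: "complete_abs absv"
    using assms(1) unfolding CANA_field_def by auto
  obtain c where c: "c \<noteq> 0" "normalized_form absv (smult c P) (smult c Q)"
    "\<forall>x y. max (absv x) (absv y) = 1 \<longrightarrow>
           max (absv (hom_eval (smult c P) (rdeg P Q) x y))
               (absv (hom_eval (smult c Q) (rdeg P Q) x y)) = 1"
    using assms(4) unfolding good_reduction_def by blast
  interpret gr absv P Q c
    by (unfold_locales) (use na alg compl assms(2,3) c in auto)
  show ?thesis by (rule main[OF assms(5-8)])
qed

end
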